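(* Let $v\equiv 1$ or $3 \pmod 6$, and for $i\ge 0$ let $\mathcal{D}_i$ denote the set of $(i+1)$-dimensional subspaces $D$ of $\mathrm{GF}(3)^v$ such that $D$ contains the all-one vector $(1,\ldots,1)$ and every vector of $D$ is orthogonal (over $\mathrm{GF}(3)$) to the characteristic vector of every block of at least one common Steiner triple system of order $v$ on $\{1,\ldots,v\}$. Let $i$ and $j$ be nonnegative integers with $i\le j$. If $\mathcal{D}_j$ is nonempty, then every subspace from $\mathcal{D}_i$ is contained in exactly $\Gamma_{v,i,j}$ subspaces from $\mathcal{D}_j$, where $$\Gamma_{v,i,j}=\left(\left(\tfrac{v}{3^i}\right)!\right)^{3^i}\Bigg/\left(3^{\frac{(j+i+1)(j-i)}{2}}\left(\left(\tfrac{v}{3^j}\right)!\right)^{3^j}2^{j-i}\,[j-i]_3!\right).$$ In particular, $|\mathcal{D}_j|=\Gamma_{v,0,j}$.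
   Context: A Steiner triple system STS$(v)$ on the point set $\{1,\ldots,v\}$ is a collection of 3-subsets (blocks) such that every 2-subset of $\{1,\ldots,v\}$ is contained in exactly one block. A block is identified with its characteristic vector in $\mathrm{GF}(3)^v$ (entries $1$ at the positions of its points, $0$ elsewhere). Vectors $x,y$ are orthogonal if $\sum_t x_ty_t=0$. The $q$-factorial is $[n]_q!=\prod_{s=1}^n\sum_{r=0}^{s-1}q^r$ (so $[0]_q!=1$). *)

theory Defs
  imports Complex_Main "HOL-Library.Numeral_Type"
begin

text \<open>GF(3) is the numeral type 3 (integers modulo 3, a commutative ring of
characteristic 3). A vector of GF(3)^v is a function nat => 3 whose support
lies in the coordinate set {1..v}.\<close>

type_synonym gf3vec = "nat \<Rightarrow> 3"

definition vecs :: "nat \<Rightarrow> gf3vec set" where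
  "vecs v = {x. \<forall>t. t \<notin> {1..v} \<longrightarrow> x t = 0}"

definition all_one :: "nat \<Rightarrow> gf3vec" where
  "all_one v = (\<lambda>t. if t \<in> {1..v} then 1 else 0)"

definition char_vec :: "nat set \<Rightarrow> gf3vec" where
  "char_vec B = (\<lambda>t. if t \<in> B then 1 else 0)"

definition orth :: "nat \<Rightarrow> gf3vec \<Rightarrow> gf3vec \<Rightarrow> bool" where
  "orth v x y \<longleftrightarrow> (\<Sum>t\<in>{1..v}. x t * y t) = 0"

definition subspace3 :: "nat \<Rightarrow> gf3vec set \<Rightarrow> bool" where
  "subspace3 v D \<longleftrightarrow> D \<subseteq> vecs v \<and> (\<lambda>t. 0) \<in> D \<and>
     (\<forall>x\<in>D. \<forall>y\<in>D. (\<lambda>t. x t + y t) \<in> D) \<and>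
     (\<forall>c::3. \<forall>x\<in>D. (\<lambda>t. c * x t) \<in> D)"

definition lin_indep3 :: "gf3vec set \<Rightarrow> bool" where
  "lin_indep3 B \<longleftrightarrow> finite B \<and>
     (\<forall>c::gf3vec \<Rightarrow> 3. (\<lambda>t. \<Sum>b\<in>B. c b * b t) = (\<lambda>t. 0) \<longrightarrow> (\<forall>b\<in>B. c b = 0))"

definition span3 :: "gf3vec set \<Rightarrow> gf3vec set" where
  "span3 B = {(\<lambda>t. \<Sum>b\<in>B. c b * b t) | c :: gf3vec \<Rightarrow> 3. True}"

definition subspace_dim :: "nat \<Rightarrow> gf3vec set \<Rightarrow> nat \<Rightarrow> bool" where
  "subspace_dim v D k \<longleftrightarrow> subspace3 v D \<and>
     (\<exists>B. B \<subseteq> D \<and> lin_indep3 B \<and> span3 B = D \<and> card B = k)"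

definition is_STS :: "nat \<Rightarrow> nat set set \<Rightarrow> bool" where
  "is_STS v S \<longleftrightarrow> (\<forall>b\<in>S. b \<subseteq> {1..v} \<and> card b = 3) \<and>
     (\<forall>P. P \<subseteq> {1..v} \<and> card P = 2 \<longrightarrow> (\<exists>!b. b \<in> S \<and> P \<subseteq> b))"

definition Dset :: "nat \<Rightarrow> nat \<Rightarrow> gf3vec set set" where
  "Dset v i = {D. subspace_dim v D (i + 1) \<and> all_one v \<in> D \<and>
     (\<exists>S. is_STS v S \<and> (\<forall>x\<in>D. \<forall>b\<in>S. orth v x (char_vec b)))}"

definition qfact :: "real \<Rightarrow> nat \<Rightarrow> real" where
  "qfact q n = (\<Prod>s=1..n. \<Sum>r<s. q ^ r)"

definition Gamma :: "nat \<Rightarrow> nat \<Rightarrow> nat \<Rightarrow> real" where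
  "Gamma v i j =
     (fact (v div 3 ^ i)) ^ (3 ^ i) /
     (3 ^ (((j + i + 1) * (j - i)) div 2) * (fact (v div 3 ^ j)) ^ (3 ^ j)
        * 2 ^ (j - i) * qfact 3 (j - i))"

end

theory Submission
  imports Defs "HOL-Library.FuncSet"
begin


section \<open>GF(3) facts\<close>

lemma UNIV3: "(UNIV::3 set) = {0,1,2}"
proof -
  have "card {0::3,1,2} = 3" by simp
  moreover have "CARD(3) = 3" by simp
  ultimately show ?thesis
    by (metis card_subset_eq finite subset_UNIV)
qed

lemma three_cases: "(x::3) = 0 \<or> x = 1 \<or> x = 2"
  using UNIV3 by blast

lemma gf3_sq: "(a::3) \<noteq> 0 \<Longrightarrow> a * a = 1"
  using three_cases[of a] by auto

lemma gf3_triple: "x + x + (x::3) = 0"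
  using three_cases[of x] by auto

lemma gf3_negneg: "- x - x = (x::3)"
  using three_cases[of x] by auto

lemma three_eq0: "(3::3) = 0" by simp

lemma gf3_distinct3: "(a::3) \<noteq> b \<Longrightarrow> {a, b, - a - b} = UNIV"
proof -
  assume "a \<noteq> b"
  have "x \<in> {a, b, - a - b}" for x
    using three_cases[of a] three_cases[of b] three_cases[of x] \<open>a \<noteq> b\<close> three_eq0 by auto
  then show ?thesis by blast
qed

lemma gf3_third_ne: "- p - q = (q::3) \<Longrightarrow> p = q"
  using three_cases[of p] three_cases[of q] by auto

lemma sum3_zero: "(x::'a::ab_group_add) + y + w = 0 \<longleftrightarrow> w = - x - y"
  by (metis add.commute add_diff_cancel_left' diff_minus_eq_add eq_neg_iff_add_eq_0 minus_diff_eq)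

lemma card3: "CARD(3) = 3" by simp


definition Sp :: "nat \<Rightarrow> (nat \<Rightarrow> gf3vec) \<Rightarrow> nat \<Rightarrow> gf3vec set" where
  "Sp v z n = {(\<lambda>t. c0 * all_one v t + (\<Sum>l<n. c l * z l t)) | c0 c. True}"

definition Ind :: "nat \<Rightarrow> (nat \<Rightarrow> gf3vec) \<Rightarrow> nat \<Rightarrow> bool" where
  "Ind v z n \<longleftrightarrow> (\<forall>k<n. z k \<notin> Sp v z k)"

definition AInd :: "nat \<Rightarrow> (nat \<Rightarrow> gf3vec) \<Rightarrow> nat \<Rightarrow> bool" where
  "AInd v z n \<longleftrightarrow> (\<forall>c0 c. (\<forall>t\<in>{1..v}. c0 + (\<Sum>l<n. c l * z l t) = 0) \<longrightarrow> c0 = 0 \<and> (\<forall>l<n. c l = 0))"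

lemma SpI: "(\<And>t. u t = cc * all_one v t + (\<Sum>l<n. c l * z l t)) \<Longrightarrow> u \<in> Sp v z n"
proof -
  assume "\<And>t. u t = cc * all_one v t + (\<Sum>l<n. c l * z l t)"
  then have "u = (\<lambda>t. cc * all_one v t + (\<Sum>l<n. c l * z l t))" by auto
  then show ?thesis unfolding Sp_def by blast
qed

lemma SpE: "u \<in> Sp v z n \<Longrightarrow> (\<And>c0 c. u = (\<lambda>t. c0 * all_one v t + (\<Sum>l<n. c l * z l t)) \<Longrightarrow> P) \<Longrightarrow> P"
  unfolding Sp_def by blast

lemma Sp_Suc: "Sp v z (Suc n) = {(\<lambda>t. w t + a * z n t) | w a. w \<in> Sp v z n}"
proof
  show "Sp v z (Suc n) \<subseteq> {(\<lambda>t. w t + a * z n t) | w a. w \<in> Sp v z n}"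
  proof
    fix u assume "u \<in> Sp v z (Suc n)"
    then obtain c0 c where u: "u = (\<lambda>t. c0 * all_one v t + (\<Sum>l<Suc n. c l * z l t))"
      by (rule SpE)
    define w where "w = (\<lambda>t. c0 * all_one v t + (\<Sum>l<n. c l * z l t))"
    have "u = (\<lambda>t. w t + c n * z n t)"
      unfolding u w_def by (simp add: add.assoc)
    moreover have "w \<in> Sp v z n"
      unfolding w_def by (rule SpI) simp
    ultimately show "u \<in> {(\<lambda>t. w t + a * z n t) | w a. w \<in> Sp v z n}" by blast
  qed
  show "{(\<lambda>t. w t + a * z n t) | w a. w \<in> Sp v z n} \<subseteq> Sp v z (Suc n)"
  proof
    fix u assume "u \<in> {(\<lambda>t. w t + a * z n t) | w a. w \<in> Sp v z n}"
    then obtain w a where u: "u = (\<lambda>t. w t + a * z n t)" and w: "w \<in> Sp v z n" by blast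
    from w obtain c0 c where w: "w = (\<lambda>t. c0 * all_one v t + (\<Sum>l<n. c l * z l t))"
      by (rule SpE)
    define c' where "c' = c(n := a)"
    have "(\<Sum>l<n. c' l * z l t) = (\<Sum>l<n. c l * z l t)" for t
      by (rule sum.cong) (auto simp: c'_def)
    then show "u \<in> Sp v z (Suc n)"
      by (intro SpI[where cc=c0 and c=c']) (simp add: u w add.assoc c'_def)
  qed
qed

lemma Sp_0: "Sp v z 0 = range (\<lambda>c0. (\<lambda>t. c0 * all_one v t))"
  unfolding Sp_def by auto

lemma Sp_Suc_image: "Sp v z (Suc n) = (\<lambda>(w,a). (\<lambda>t. w t + a * z n t)) ` (Sp v z n \<times> UNIV)"
  unfolding Sp_Suc by auto

lemma finite_Sp: "finite (Sp v z n)"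
  by (induction n) (auto simp: Sp_0 Sp_Suc_image)

lemma Sp_sub_Suc: "Sp v z n \<subseteq> Sp v z (Suc n)"
proof
  fix w assume "w \<in> Sp v z n"
  then have "(\<lambda>t. w t + 0 * z n t) \<in> Sp v z (Suc n)" unfolding Sp_Suc by blast
  then show "w \<in> Sp v z (Suc n)" by simp
qed

lemma Sp_mono: "m \<le> n \<Longrightarrow> Sp v z m \<subseteq> Sp v z n"
proof (induction n rule: dec_induct)
  case base then show ?case by simp
next
  case (step n) then show ?case using Sp_sub_Suc by blast
qed

lemma Sp_cong: "(\<And>l. l < n \<Longrightarrow> z l = z' l) \<Longrightarrow> Sp v z n = Sp v z' n"
proof -
  assume h: "\<And>l. l < n \<Longrightarrow> z l = z' l"
  have "(\<Sum>l<n. c l * z l t) = (\<Sum>l<n. c l * z' l t)" for c and t :: nat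
    by (rule sum.cong) (auto simp: h)
  then show ?thesis unfolding Sp_def by simp
qed

lemma Ind_cong: "(\<And>l. l < n \<Longrightarrow> z l = z' l) \<Longrightarrow> Ind v z n = Ind v z' n"
proof -
  assume h: "\<And>l. l < n \<Longrightarrow> z l = z' l"
  have "Sp v z k = Sp v z' k" if "k < n" for k
    by (rule Sp_cong) (use h that in auto)
  then show ?thesis unfolding Ind_def using h by auto
qed

lemma all_one_Sp: "all_one v \<in> Sp v z n"
proof -
  show ?thesis by (rule SpI[where cc=1 and c="\<lambda>_. 0"]) simp
qed

lemma z_in_Sp: "l < n \<Longrightarrow> z l \<in> Sp v z n"
proof -
  assume l: "l < n"
  have "(\<Sum>k<n. (\<lambda>k. if k = l then 1 else 0) k * z k t) = (\<Sum>k<n. if k = l then z k t else 0)" for t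
    by (rule sum.cong) auto
  also have "\<dots> t = z l t" for t using l by (simp add: sum.delta)
  finally show ?thesis by (intro SpI[where cc=0 and c="\<lambda>k. if k = l then 1 else 0"]) simp
qed

lemma Sp_add: "x \<in> Sp v z n \<Longrightarrow> y \<in> Sp v z n \<Longrightarrow> (\<lambda>t. x t + y t) \<in> Sp v z n"
proof -
  assume "x \<in> Sp v z n" "y \<in> Sp v z n"
  obtain c0 c where x: "x = (\<lambda>t. c0 * all_one v t + (\<Sum>l<n. c l * z l t))"
    using \<open>x \<in> Sp v z n\<close> by (rule SpE)
  obtain d0 d where y: "y = (\<lambda>t. d0 * all_one v t + (\<Sum>l<n. d l * z l t))"
    using \<open>y \<in> Sp v z n\<close> by (rule SpE)
  show ?thesis
    by (intro SpI[where cc="c0 + d0" and c="\<lambda>l. c l + d l"]) (simp add: x y algebra_simps sum.distrib)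
qed

lemma Sp_smult: "x \<in> Sp v z n \<Longrightarrow> (\<lambda>t. a * x t) \<in> Sp v z n"
proof -
  assume "x \<in> Sp v z n"
  then obtain c0 c where x: "x = (\<lambda>t. c0 * all_one v t + (\<Sum>l<n. c l * z l t))"
    unfolding Sp_def by blast
  show ?thesis
    by (intro SpI[where cc="a * c0" and c="\<lambda>l. a * c l"]) (simp add: x algebra_simps sum_distrib_left)
qed

lemma Sp_zero: "(\<lambda>t. 0) \<in> Sp v z n"
  using Sp_smult[OF all_one_Sp, of 0] by simp

lemma Sp_vecs: "(\<And>l. l < n \<Longrightarrow> z l \<in> vecs v) \<Longrightarrow> Sp v z n \<subseteq> vecs v"
proof
  fix u assume z: "\<And>l. l < n \<Longrightarrow> z l \<in> vecs v" and uS: "u \<in> Sp v z n"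
  obtain c0 c where u: "u = (\<lambda>t. c0 * all_one v t + (\<Sum>l<n. c l * z l t))"
    using uS by (rule SpE)
  have "u t = 0" if "t \<notin> {1..v}" for t
  proof -
    have "z l t = 0" if "l < n" for l using z[OF that] \<open>t \<notin> {1..v}\<close> unfolding vecs_def by auto
    then show ?thesis unfolding u using \<open>t \<notin> {1..v}\<close> by (auto simp: all_one_def)
  qed
  then show "u \<in> vecs v" unfolding vecs_def by auto
qed

lemma Sp_subspace3: "(\<And>l. l < n \<Longrightarrow> z l \<in> vecs v) \<Longrightarrow> subspace3 v (Sp v z n)"
  unfolding subspace3_def using Sp_vecs Sp_zero Sp_add Sp_smult by blast

lemma Sp_subset:
  assumes D: "subspace3 v D" "all_one v \<in> D" and z: "\<And>l. l < n \<Longrightarrow> z l \<in> D"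
  shows "Sp v z n \<subseteq> D"
  using z
proof (induction n)
  case 0
  then show ?case using D unfolding Sp_0 subspace3_def by auto
next
  case (Suc n)
  then have IH: "Sp v z n \<subseteq> D" by auto
  have zn: "z n \<in> D" using Suc.prems by auto
  show ?case
  proof
    fix u assume "u \<in> Sp v z (Suc n)"
    then obtain w a where u: "u = (\<lambda>t. w t + a * z n t)" and w: "w \<in> Sp v z n"
      unfolding Sp_Suc by blast
    have "w \<in> D" using w IH by auto
    moreover have "(\<lambda>t. a * z n t) \<in> D" using zn D unfolding subspace3_def by blast
    ultimately show "u \<in> D" using D unfolding subspace3_def u by force
  qed
qed

lemma all_one_1: "1 \<le> v \<Longrightarrow> all_one v 1 = 1"
  unfolding all_one_def by auto



lemma card_Sp:
  assumes v: "1 \<le> v" and I: "Ind v z n"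
  shows "card (Sp v z n) = 3 ^ Suc n"
  using I
proof (induction n)
  case 0
  have "inj (\<lambda>c0. (\<lambda>t. c0 * all_one v t))"
  proof (rule injI)
    fix a b :: 3 assume "(\<lambda>t. a * all_one v t) = (\<lambda>t. b * all_one v t)"
    then have "a * all_one v 1 = b * all_one v 1" by (rule fun_cong)
    then show "a = b" using all_one_1[OF v] by simp
  qed
  then have "card (Sp v z 0) = CARD(3)" unfolding Sp_0 by (rule card_image)
  then show ?case by simp
next
  case (Suc n)
  have In: "Ind v z n" and zn: "z n \<notin> Sp v z n" using Suc.prems unfolding Ind_def by auto
  have inj: "inj_on (\<lambda>(w,a). (\<lambda>t. w t + a * z n t)) (Sp v z n \<times> UNIV)"
  proof (rule inj_onI, clarify)
    fix w a w' a'
    assume w: "w \<in> Sp v z n" and w': "w' \<in> Sp v z n"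
      and eq: "(\<lambda>t. w t + a * z n t) = (\<lambda>t. w' t + a' * z n t)"
    show "w = w' \<and> a = a'"
    proof (cases "a = a'")
      case True
      then show ?thesis using eq by (auto simp: fun_eq_iff)
    next
      case False
      have sq: "(a - a') * (a - a') = 1" using False gf3_sq[of "a - a'"] by auto
      have "z n t = (a - a') * (w' t + (-1) * w t)" for t
      proof -
        have "w t + a * z n t = w' t + a' * z n t" using fun_cong[OF eq, of t] by simp
        then have "(a - a') * z n t = w' t - w t" by (simp add: algebra_simps)
        then have "((a - a') * (a - a')) * z n t = (a - a') * (w' t - w t)"
          by (simp only: mult.assoc)
        then show ?thesis using sq by simp
      qed
      then have "z n = (\<lambda>t. (a - a') * (w' t + (-1) * w t))" by (rule ext)
      moreover have "(\<lambda>t. (a - a') * (w' t + (-1) * w t)) \<in> Sp v z n"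
        using Sp_smult Sp_add w w' by blast
      ultimately have "z n \<in> Sp v z n" by simp
      then show ?thesis using zn by simp
    qed
  qed
  have "card (Sp v z (Suc n)) = card (Sp v z n \<times> (UNIV::3 set))"
    unfolding Sp_Suc_image by (rule card_image[OF inj])
  also have "\<dots> = 3 ^ Suc n * 3" using Suc.IH[OF In] by (simp add: card_cartesian_product)
  finally show ?case by simp
qed


lemma sum_trunc: "m \<le> (n::nat) \<Longrightarrow> (\<Sum>l<n. (if l < m then f l else 0)) = (\<Sum>l<m. f l :: 'a::comm_monoid_add)"
proof (induction n rule: dec_induct)
  case base then show ?case by (rule sum.cong) auto
next
  case (step n) then show ?case by simp
qed

lemma AInd_mono: assumes "AInd v z n" "m \<le> n" shows "AInd v z m"
  unfolding AInd_def
proof (intro allI impI)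
  fix c0 c assume h: "\<forall>t\<in>{1..v}. c0 + (\<Sum>l<m. c l * z l t) = 0"
  define c' where "c' l = (if l < m then c l else 0)" for l
  have "(\<Sum>l<n. c' l * z l t) = (\<Sum>l<m. c l * z l t)" for t
  proof -
    have "(\<Sum>l<n. c' l * z l t) = (\<Sum>l<n. (if l < m then c l * z l t else 0))"
      by (rule sum.cong) (auto simp: c'_def)
    also have "\<dots> = (\<Sum>l<m. c l * z l t)" by (rule sum_trunc[OF assms(2)])
    finally show ?thesis .
  qed
  then have "\<forall>t\<in>{1..v}. c0 + (\<Sum>l<n. c' l * z l t) = 0" using h by simp
  then have "c0 = 0 \<and> (\<forall>l<n. c' l = 0)" using assms(1) unfolding AInd_def by blast
  then show "c0 = 0 \<and> (\<forall>l<m. c l = 0)" using assms(2)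
    by (metis c'_def order_less_le_trans)
qed

lemma Ind_Suc: "Ind v z (Suc n) \<longleftrightarrow> Ind v z n \<and> z n \<notin> Sp v z n"
  unfolding Ind_def using less_Suc_eq by auto

lemma Ind_imp_AInd:
  assumes v: "1 \<le> v" and z: "\<And>l. l < n \<Longrightarrow> z l \<in> vecs v"
  shows "Ind v z n \<Longrightarrow> AInd v z n"
  using z
proof (induction n)
  case 0
  then show ?case unfolding AInd_def using v by auto
next
  case (Suc n)
  have In: "Ind v z n" and zn: "z n \<notin> Sp v z n" using Suc.prems Ind_Suc by auto
  have AI: "AInd v z n" using Suc.IH In Suc.prems by auto
  show ?case unfolding AInd_def
  proof (intro allI impI)
    fix c0 c assume h: "\<forall>t\<in>{1..v}. c0 + (\<Sum>l<Suc n. c l * z l t) = 0"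
    show "c0 = 0 \<and> (\<forall>l<Suc n. c l = 0)"
    proof (cases "c n = 0")
      case True
      then have "\<forall>t\<in>{1..v}. c0 + (\<Sum>l<n. c l * z l t) = 0" using h by simp
      then have "c0 = 0 \<and> (\<forall>l<n. c l = 0)" using AI unfolding AInd_def by blast
      then show ?thesis using True less_Suc_eq by auto
    next
      case False
      have sq: "c n * c n = 1" using gf3_sq False by auto
      have "z n t = (- c n * c0) * all_one v t + (\<Sum>l<n. (- c n * c l) * z l t)" for t
      proof (cases "t \<in> {1..v}")
        case True
        then have "c0 + (\<Sum>l<n. c l * z l t) + c n * z n t = 0" using h by (simp add: add.assoc)
        then have "c n * z n t = - (c0 + (\<Sum>l<n. c l * z l t))"
          by (metis add.commute eq_neg_iff_add_eq_0)
        then have "(c n * c n) * z n t = - c n * (c0 + (\<Sum>l<n. c l * z l t))"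
          by (simp only: mult.assoc) (simp add: algebra_simps)
        then show ?thesis using sq True
          by (simp add: all_one_def sum_distrib_left distrib_left mult.assoc)
      next
        case False
        have "z l t = 0" if "l < Suc n" for l using Suc.prems(2)[OF that] False unfolding vecs_def by auto
        then show ?thesis using False by (auto simp: all_one_def)
      qed
      then have "z n \<in> Sp v z n" by (intro SpI[where cc="- c n * c0" and c="\<lambda>l. - c n * c l"])
      then show ?thesis using zn by simp
    qed
  qed
qed

lemma AInd_imp_Ind: "AInd v z n \<Longrightarrow> Ind v z n"
  unfolding Ind_def
proof (intro allI impI)
  fix k assume A: "AInd v z n" and k: "k < n"
  show "z k \<notin> Sp v z k"
  proof
    assume "z k \<in> Sp v z k"
    then obtain c0 c where zk: "z k = (\<lambda>t. c0 * all_one v t + (\<Sum>l<k. c l * z l t))" by (rule SpE)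
    define c' where "c' l = (if l < k then - c l else if l = k then 1 else 0)" for l
    have "(\<forall>t\<in>{1..v}. (- c0) + (\<Sum>l<n. c' l * z l t) = 0)"
    proof
      fix t assume t: "t \<in> {1..v}"
      have "(\<Sum>l<n. c' l * z l t) = (\<Sum>l<n. (if l < Suc k then c' l * z l t else 0))"
        by (rule sum.cong) (auto simp: c'_def)
      also have "\<dots> = (\<Sum>l<Suc k. c' l * z l t)" using k by (intro sum_trunc) simp
      also have "\<dots> = (\<Sum>l<k. - c l * z l t) + z k t"
        by (simp add: c'_def)
      also have "\<dots> = c0" using fun_cong[OF zk, of t] t
        by (simp add: all_one_def sum_negf)
      finally show "(- c0) + (\<Sum>l<n. c' l * z l t) = 0" by simp
    qed
    then have "c' k = 0" using A k unfolding AInd_def by blast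
    then show False by (simp add: c'_def)
  qed
qed


definition fib :: "nat \<Rightarrow> (nat \<Rightarrow> gf3vec) \<Rightarrow> nat \<Rightarrow> (nat \<Rightarrow> 3) \<Rightarrow> nat set" where
  "fib v z n p = {t\<in>{1..v}. \<forall>l<n. z l t = p l}"

definition LC :: "nat \<Rightarrow> (nat \<Rightarrow> gf3vec) \<Rightarrow> nat \<Rightarrow> bool" where
  "LC v z n \<longleftrightarrow> (\<forall>a\<in>{1..v}. \<forall>b\<in>{1..v}. \<exists>c\<in>{1..v}. \<forall>l<n. z l a + z l b + z l c = 0)"

lemma fib_Suc: "fib v z (Suc n) p = {t \<in> fib v z n p. z n t = p n}"
  unfolding fib_def using less_Suc_eq by auto

lemma fib_cong: "(\<And>l. l < n \<Longrightarrow> p l = q l) \<Longrightarrow> fib v z n p = fib v z n q"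
  unfolding fib_def by auto

lemma finite_fib: "finite (fib v z n p)"
  unfolding fib_def by auto

lemma fib_sub: "fib v z n p \<subseteq> {1..v}"
  unfolding fib_def by auto

lemma gf3_neg2: "- (x::3) = 2 * x"
  using three_cases[of x] by auto

lemma full_image:
  assumes v: "1 \<le> v"
  shows "AInd v z n \<Longrightarrow> LC v z n \<Longrightarrow> fib v z n p \<noteq> {}"
proof (induction n arbitrary: p)
  case 0
  then show ?case using v unfolding fib_def by auto
next
  case (Suc n)
  have AI: "AInd v z n" using Suc.prems(1) AInd_mono by (meson le_SucI order_refl)
  have LCn: "LC v z n" using Suc.prems(2) unfolding LC_def by (meson less_SucI)
  have IH: "\<And>p. fib v z n p \<noteq> {}" using Suc.IH AI LCn by blast
  have LCs: "\<forall>a\<in>{1..v}. \<forall>b\<in>{1..v}. \<exists>c\<in>{1..v}. \<forall>l<Suc n. z l a + z l b + z l c = 0"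
    using Suc.prems(2) unfolding LC_def by simp
  define V where "V q = (\<lambda>t. z n t) ` fib v z n q" for q
  have key: "\<exists>c\<in>fib v z n (\<lambda>l. - q l - r l). z n c = - z n a - z n b"
    if a: "a \<in> fib v z n q" and b: "b \<in> fib v z n r" for a b q r
  proof -
    have "a \<in> {1..v}" "b \<in> {1..v}" using a b unfolding fib_def by auto
    then obtain c where c: "c \<in> {1..v}" "\<forall>l<Suc n. z l a + z l b + z l c = 0" using LCs by blast
    have "z l c = - z l a - z l b" if "l < Suc n" for l using c(2) that sum3_zero by blast
    then have "\<forall>l<n. z l c = - q l - r l" "z n c = - z n a - z n b"
      using a b unfolding fib_def by auto
    then show ?thesis using c(1) unfolding fib_def by auto
  qed
  show ?case
  proof (cases "\<exists>q a b. a \<in> fib v z n q \<and> b \<in> fib v z n q \<and> z n a \<noteq> z n b")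
    case True
    then obtain q a b where ab: "a \<in> fib v z n q" "b \<in> fib v z n q" "z n a \<noteq> z n b" by blast
    have qq: "fib v z n (\<lambda>l. - q l - q l) = fib v z n q" by (simp add: gf3_negneg)
    obtain c where c: "c \<in> fib v z n q" "z n c = - z n a - z n b" using key[OF ab(1) ab(2)] qq by auto
    have "- z n a - z n b \<in> V q" unfolding V_def using c by (metis image_eqI)
    then have "{z n a, z n b, - z n a - z n b} \<subseteq> V q" using ab unfolding V_def by auto
    then have Vq: "V q = UNIV" using gf3_distinct3[OF ab(3)] by auto
    have spread: "V (\<lambda>l. - q' l - r l) = UNIV" if Vq': "V q' = UNIV" for q' r
    proof -
      obtain b where b: "b \<in> fib v z n r" using IH by blast
      have "u \<in> V (\<lambda>l. - q' l - r l)" for u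
      proof -
        have "- u - z n b \<in> V q'" using Vq' by auto
        then obtain a where a: "a \<in> fib v z n q'" "z n a = - u - z n b" unfolding V_def by auto
        obtain c where "c \<in> fib v z n (\<lambda>l. - q' l - r l)" "z n c = - z n a - z n b"
          using key[OF a(1) b] by auto
        then show ?thesis unfolding V_def using a(2) by (auto simp: algebra_simps)
      qed
      then show ?thesis by auto
    qed
    have "(\<lambda>l. - q l - (\<lambda>l. - q l - p l) l) = p" by (auto simp: fun_eq_iff)
    then have "V p = UNIV" using spread[OF Vq, of "\<lambda>l. - q l - p l"] by simp
    then have "p n \<in> V p" by auto
    then show ?thesis unfolding V_def fib_Suc by auto
  next
    case False
    then have const: "\<And>q a b. a \<in> fib v z n q \<Longrightarrow> b \<in> fib v z n q \<Longrightarrow> z n a = z n b" by blast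
    define g where "g q = z n (SOME t. t \<in> fib v z n q)" for q
    have gq: "z n t = g q" if "t \<in> fib v z n q" for t q
    proof -
      have "(SOME t. t \<in> fib v z n q) \<in> fib v z n q" using that by (rule someI)
      then show ?thesis unfolding g_def using const that by blast
    qed
    have gadd: "g (\<lambda>l. - q l - r l) = - g q - g r" for q r
    proof -
      obtain a where a: "a \<in> fib v z n q" using IH by blast
      obtain b where b: "b \<in> fib v z n r" using IH by blast
      obtain c where c: "c \<in> fib v z n (\<lambda>l. - q l - r l)" "z n c = - z n a - z n b"
        using key[OF a b] by auto
      show ?thesis using gq[OF a] gq[OF b] gq[OF c(1)] c(2) by simp
    qed
    define h where "h q = g q - g (\<lambda>_. 0)" for q
    have h0: "h (\<lambda>_. 0) = 0" unfolding h_def by simp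
    have hneg: "h (\<lambda>l. - a l) = - h a" for a
    proof -
      have e: "g (\<lambda>l. - a l) = - g a - g (\<lambda>_. 0)"
        using gadd[of a "\<lambda>_. 0"] by simp
      have "g a + g (\<lambda>l. - a l) = - g (\<lambda>_. 0)"
        unfolding e by simp
      also have "\<dots> = 2 * g (\<lambda>_. 0)" by (rule gf3_neg2)
      finally show ?thesis unfolding h_def by (simp add: algebra_simps)
    qed
    have hadd: "h (\<lambda>l. a l + b l) = h a + h b" for a b
    proof -
      have "(\<lambda>l. a l + b l) = (\<lambda>l. - (\<lambda>l. - a l) l - (\<lambda>l. - b l) l)" by simp
      then have "g (\<lambda>l. a l + b l) = - g (\<lambda>l. - a l) - g (\<lambda>l. - b l)" using gadd by metis
      then have "h (\<lambda>l. a l + b l) = - h (\<lambda>l. - a l) - h (\<lambda>l. - b l) - 3 * g (\<lambda>_. 0)"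
        unfolding h_def by (simp add: algebra_simps)
      then show ?thesis using hneg three_eq0 by simp
    qed
    have hcong: "h a = h b" if "\<And>l. l < n \<Longrightarrow> a l = b l" for a b
      unfolding h_def g_def using fib_cong[of n a b, OF that] by simp
    define e where "e k = (\<lambda>l::nat. if l = k then (1::3) else 0)" for k
    have hsc: "h (\<lambda>l. s * a l) = s * h a" for s a
    proof -
      have "s = 0 \<or> s = 1 \<or> s = 2" by (rule three_cases)
      moreover have "h (\<lambda>l. 2 * a l) = 2 * h a"
      proof -
        have "(\<lambda>l. 2 * a l) = (\<lambda>l. a l + a l)" by (simp only: mult_2)
        then have "h (\<lambda>l. 2 * a l) = h a + h a" using hadd[of a a] by simp
        then show ?thesis by (simp only: mult_2)
      qed
      ultimately show ?thesis using h0 by auto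
    qed
    have htr: "h (\<lambda>l. if l < m then q l else 0) = (\<Sum>l<m. q l * h (e l))" for m q
    proof (induction m)
      case 0 then show ?case using h0 by simp
    next
      case (Suc m)
      have "(\<lambda>l. if l < Suc m then q l else 0) = (\<lambda>l. (if l < m then q l else 0) + (\<lambda>l. q m * e m l) l)"
        by (auto simp: fun_eq_iff e_def less_Suc_eq)
      then have "h (\<lambda>l. if l < Suc m then q l else 0) = h (\<lambda>l. if l < m then q l else 0) + h (\<lambda>l. q m * e m l)"
        using hadd by metis
      then show ?case using Suc.IH hsc by simp
    qed
    have hlin: "h q = (\<Sum>l<n. q l * h (e l))" for q
      using hcong[of q "\<lambda>l. if l < n then q l else 0"] htr[of n q] by simp
    define c0 where "c0 = - g (\<lambda>_. 0)"
    define c where "c l = (if l < n then - h (e l) else 1)" for l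
    have "\<forall>t\<in>{1..v}. c0 + (\<Sum>l<Suc n. c l * z l t) = 0"
    proof
      fix t assume t: "t \<in> {1..v}"
      have "t \<in> fib v z n (\<lambda>l. z l t)" using t unfolding fib_def by auto
      then have "z n t = g (\<lambda>l. z l t)" by (rule gq)
      also have "\<dots> = g (\<lambda>_. 0) + h (\<lambda>l. z l t)" unfolding h_def by simp
      also have "h (\<lambda>l. z l t) = (\<Sum>l<n. z l t * h (e l))" by (rule hlin)
      finally have zt: "z n t = g (\<lambda>_. 0) + (\<Sum>l<n. z l t * h (e l))" .
      have "(\<Sum>l<n. c l * z l t) = (\<Sum>l<n. - (z l t * h (e l)))"
        by (rule sum.cong) (simp_all add: c_def mult.commute)
      also have "\<dots> = - (\<Sum>l<n. z l t * h (e l))" by (rule sum_negf)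
      finally have "(\<Sum>l<n. c l * z l t) = - (\<Sum>l<n. z l t * h (e l))" .
      then show "c0 + (\<Sum>l<Suc n. c l * z l t) = 0" using zt by (simp add: c0_def c_def)
    qed
    then have "c n = 0" using Suc.prems(1) unfolding AInd_def by blast
    then show ?thesis by (simp add: c_def)
  qed
qed


lemma orth_block: "b \<subseteq> {1..v} \<Longrightarrow> orth v x (char_vec b) \<longleftrightarrow> (\<Sum>t\<in>b. x t) = 0"
proof -
  assume b: "b \<subseteq> {1..v}"
  have "(\<Sum>t\<in>{1..v}. x t * char_vec b t) = (\<Sum>t\<in>{1..v}. if t \<in> b then x t else 0)"
    by (rule sum.cong) (auto simp: char_vec_def)
  also have "\<dots> = (\<Sum>t\<in>{1..v} \<inter> b. x t)" by (simp add: sum.inter_restrict)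
  also have "{1..v} \<inter> b = b" using b by auto
  finally show ?thesis unfolding orth_def by simp
qed


lemma STS_pair:
  assumes S: "is_STS v S" and P: "P \<subseteq> {1..v}" "card P = 2"
  shows "\<exists>!B. B \<in> S \<and> P \<subseteq> B"
  using S P unfolding is_STS_def by simp

lemma STS_block:
  assumes S: "is_STS v S" and B: "B \<in> S"
  shows "B \<subseteq> {1..v}" "card B = 3"
  using S B unfolding is_STS_def by simp_all

lemma STS_third:
  assumes S: "is_STS v S" and a: "a \<in> {1..v}" and b: "b \<in> {1..v}" and ab: "a \<noteq> b"
  shows "\<exists>c. c \<in> {1..v} \<and> c \<noteq> a \<and> c \<noteq> b \<and> {a,b,c} \<in> S"
proof -
  have P: "{a,b} \<subseteq> {1..v}" "card {a,b} = 2" using a b ab by auto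
  obtain B where B: "B \<in> S" "{a,b} \<subseteq> B" using ex1_implies_ex[OF STS_pair[OF S P]] by blast
  have Bv: "B \<subseteq> {1..v}" and B3: "card B = 3" using STS_block[OF S B(1)] by auto
  have fB: "finite B" using Bv finite_subset by blast
  have "card (B - {a,b}) = card B - card {a,b}" using fB B(2) by (meson card_Diff_subset finite_subset)
  then have "card (B - {a,b}) = 1" using B3 P(2) by simp
  then obtain c where c: "B - {a,b} = {c}" by (meson card_1_singletonE)
  have "B = {a,b} \<union> (B - {a,b})" using B(2) by blast
  then have "B = {a,b,c}" using c by (simp add: insert_commute)
  moreover have "c \<notin> {a,b}" "c \<in> B" using c by blast+
  ultimately show ?thesis using B(1) Bv by auto
qed

lemma STS_unique:
  assumes S: "is_STS v S" and B: "B \<in> S" "B' \<in> S" and ac: "a \<in> B" "c \<in> B" "a \<in> B'" "c \<in> B'" "a \<noteq> c"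
  shows "B = B'"
proof -
  have "B \<subseteq> {1..v}" using STS_block[OF S B(1)] by simp
  then have P: "{a,c} \<subseteq> {1..v}" "card {a,c} = 2" using ac by auto
  have "{a,c} \<subseteq> B" "{a,c} \<subseteq> B'" using ac by auto
  then show ?thesis using STS_pair[OF S P] B by blast
qed

lemma block_sum:
  assumes S: "is_STS v S" and B: "{a,b,c} \<in> S" "a \<noteq> b" "c \<noteq> a" "c \<noteq> b"
    and o: "orth v x (char_vec {a,b,c})"
  shows "x a + x b + x c = 0"
proof -
  have "{a,b,c} \<subseteq> {1..v}" using STS_block[OF S B(1)] by simp
  then have h: "(\<Sum>t\<in>{a,b,c}. x t) = 0" using orth_block[of "{a,b,c}" v x] o by simp
  have "a \<notin> {b,c}" "b \<notin> {c}" using B(2-4) by auto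
  then have "(\<Sum>t\<in>{a,b,c}. x t) = x a + x b + x c"
    by (simp only: sum.insert finite.emptyI finite.insertI sum.empty add.assoc) simp
  then have "x a + x b + x c = (\<Sum>t\<in>{a,b,c}. x t)" by (rule sym)
  also have "\<dots> = 0" by (rule h)
  finally show ?thesis .
qed
lemma STS_LC:
  assumes S: "is_STS v S" and o: "\<forall>l<n. \<forall>B\<in>S. orth v (z l) (char_vec B)"
  shows "LC v z n"
  unfolding LC_def
proof (intro ballI)
  fix a b assume a: "a \<in> {1..v}" and b: "b \<in> {1..v}"
  show "\<exists>c\<in>{1..v}. \<forall>l<n. z l a + z l b + z l c = 0"
  proof (cases "a = b")
    case True
    have "\<forall>l<n. z l a + z l b + z l a = 0" using True by (metis gf3_triple)
    then show ?thesis using a by blast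
  next
    case False
    then obtain c where c: "c \<in> {1..v}" "c \<noteq> a" "c \<noteq> b" "{a,b,c} \<in> S"
      using STS_third[OF S a b] by blast
    have "z l a + z l b + z l c = 0" if "l < n" for l
      using block_sum[OF S c(4) False c(2) c(3)] o that c(4) by blast
    then show ?thesis using c(1) by blast
  qed
qed

lemma fib_le:
  assumes S: "is_STS v S" and o: "\<forall>l<n. \<forall>B\<in>S. orth v (z l) (char_vec B)"
    and ne: "\<And>p. fib v z n p \<noteq> {}"
  shows "card (fib v z n q) \<le> card (fib v z n p)"
proof (cases "\<forall>l<n. p l = q l")
  case True
  then have "fib v z n q = fib v z n p" using fib_cong[of n q p] by auto
  then show ?thesis by simp
next
  case False
  then obtain l0 where l0: "l0 < n" "p l0 \<noteq> q l0" by blast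
  define r where "r = (\<lambda>l. - p l - q l)"
  obtain a where a: "a \<in> fib v z n r" using ne by blast
  have ex: "\<exists>c. c \<in> fib v z n p \<and> c \<noteq> a \<and> c \<noteq> b \<and> a \<noteq> b \<and> {a,b,c} \<in> S"
    if b: "b \<in> fib v z n q" for b
  proof -
    have "r l0 \<noteq> q l0" using l0(2) gf3_third_ne unfolding r_def by blast
    then have ab: "a \<noteq> b" using a b l0(1) unfolding fib_def by auto
    have av: "a \<in> {1..v}" and bv: "b \<in> {1..v}" using a b unfolding fib_def by auto
    obtain c where c: "c \<in> {1..v}" "c \<noteq> a" "c \<noteq> b" "{a,b,c} \<in> S"
      using STS_third[OF S av bv ab] by blast
    have "z l c = p l" if "l < n" for l
    proof -
      have "z l a + z l b + z l c = 0"
        using block_sum[OF S c(4) ab c(2) c(3)] o that c(4) by blast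
      then have "z l c = - z l a - z l b" using sum3_zero by blast
      also have "\<dots> = - r l - q l" using a b that unfolding fib_def by auto
      also have "\<dots> = p l" unfolding r_def by simp
      finally show ?thesis .
    qed
    then have "c \<in> fib v z n p" using c(1) unfolding fib_def by auto
    then show ?thesis using c ab by blast
  qed
  then have "\<forall>b\<in>fib v z n q. \<exists>c. c \<in> fib v z n p \<and> c \<noteq> a \<and> c \<noteq> b \<and> a \<noteq> b \<and> {a,b,c} \<in> S"
    by blast
  then have "\<exists>\<phi>. \<forall>b\<in>fib v z n q. \<phi> b \<in> fib v z n p \<and> \<phi> b \<noteq> a \<and> \<phi> b \<noteq> b \<and> a \<noteq> b \<and> {a,b,\<phi> b} \<in> S"
    by (rule bchoice)
  then obtain \<phi> where \<phi>0: "\<forall>b\<in>fib v z n q. \<phi> b \<in> fib v z n p \<and> \<phi> b \<noteq> a \<and> \<phi> b \<noteq> b \<and> a \<noteq> b \<and> {a,b,\<phi> b} \<in> S"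
    by blast
  have \<phi>: "\<phi> b \<in> fib v z n p \<and> \<phi> b \<noteq> a \<and> \<phi> b \<noteq> b \<and> a \<noteq> b \<and> {a,b,\<phi> b} \<in> S"
    if "b \<in> fib v z n q" for b using \<phi>0 that by blast
  have "inj_on \<phi> (fib v z n q)"
  proof (rule inj_onI)
    fix b b' assume b: "b \<in> fib v z n q" and b': "b' \<in> fib v z n q" and eq: "\<phi> b = \<phi> b'"
    have B1: "{a,b,\<phi> b} \<in> S" and B2: "{a,b',\<phi> b'} \<in> S" and ne1: "a \<noteq> \<phi> b"
      using \<phi>[OF b] \<phi>[OF b'] by auto
    have "{a,b,\<phi> b} = {a,b',\<phi> b'}"
      by (rule STS_unique[OF S B1 B2, of a "\<phi> b"]) (use eq ne1 in auto)
    moreover have "b' \<noteq> \<phi> b"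
    proof
      assume "b' = \<phi> b"
      then have "b' \<in> fib v z n p" using \<phi>[OF b] by simp
      then have "z l0 b' = p l0" "z l0 b' = q l0" using b' l0(1) unfolding fib_def by auto
      then show False using l0(2) by simp
    qed
    moreover have "b' \<noteq> a" using \<phi>[OF b'] by blast
    moreover have "b' \<in> {a,b',\<phi> b'}" by simp
    ultimately have "b' \<in> {a,b,\<phi> b}" by (simp only:)
    then have "b' = a \<or> b' = b \<or> b' = \<phi> b" by simp
    then show "b = b'" using \<open>b' \<noteq> a\<close> \<open>b' \<noteq> \<phi> b\<close> by simp
  qed
  moreover have "\<phi> ` fib v z n q \<subseteq> fib v z n p" using \<phi> by auto
  ultimately show ?thesis by (rule card_inj_on_le[OF _ _ finite_fib])
qed

lemma fib_AInd:
  assumes ne: "\<And>p. fib v z n p \<noteq> {}"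
  shows "AInd v z n"
  unfolding AInd_def
proof (intro allI impI)
  fix c0 c assume h: "\<forall>t\<in>{1..v}. c0 + (\<Sum>l<n. c l * z l t) = 0"
  have ev: "c0 + (\<Sum>l<n. c l * p l) = 0" for p
  proof -
    obtain t where t: "t \<in> fib v z n p" using ne by blast
    have t1: "t \<in> {1..v}" "\<forall>l<n. z l t = p l" using t unfolding fib_def by auto
    have "c0 + (\<Sum>l<n. c l * z l t) = 0" using h t1(1) by blast
    moreover have "(\<Sum>l<n. c l * z l t) = (\<Sum>l<n. c l * p l)" by (rule sum.cong) (simp_all add: t1(2))
    ultimately show ?thesis by simp
  qed
  have c0: "c0 = 0" using ev[of "\<lambda>_. 0"] by simp
  have "c k = 0" if k: "k < n" for k
  proof -
    have "(\<Sum>l<n. c l * (if l = k then 1 else 0)) = (\<Sum>l<n. if l = k then c l else 0)"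
      by (rule sum.cong) auto
    also have "\<dots> = c k" using k by (simp add: sum.delta)
    finally show ?thesis using ev[of "\<lambda>l. if l = k then 1 else 0"] c0 by simp
  qed
  then show "c0 = 0 \<and> (\<forall>l<n. c l = 0)" using c0 by auto
qed

lemma fib_split:
  "card (fib v z k p) = (\<Sum>u\<in>UNIV. card (fib v z (Suc k) (p(k := u))))"
proof -
  have eq: "fib v z (Suc k) (p(k := u)) = {t \<in> fib v z k p. z k t = u}" for u
  proof -
    have "fib v z k (p(k := u)) = fib v z k p" by (rule fib_cong) auto
    then show ?thesis unfolding fib_Suc by simp
  qed
  have "fib v z k p = (\<Union>u\<in>UNIV. {t \<in> fib v z k p. z k t = u})" by auto
  then have "card (fib v z k p) = card (\<Union>u\<in>UNIV. {t \<in> fib v z k p. z k t = u})" by simp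
  also have "\<dots> = (\<Sum>u\<in>UNIV. card {t \<in> fib v z k p. z k t = u})"
    by (rule card_UN_disjoint) (auto simp: finite_fib)
  finally show ?thesis unfolding eq .
qed

lemma fib_sizes:
  assumes v: "1 \<le> v" and S: "is_STS v S" and o: "\<forall>l<n. \<forall>B\<in>S. orth v (z l) (char_vec B)"
    and AI: "AInd v z n"
  shows "k \<le> n \<Longrightarrow> card (fib v z k p) * 3 ^ k = v"
proof (induction k arbitrary: p)
  case 0
  have "fib v z 0 p = {1..v}" unfolding fib_def by auto
  then show ?case by simp
next
  case (Suc k)
  have AIk: "AInd v z (Suc k)" using AInd_mono[OF AI Suc.prems] .
  have ok: "\<forall>l<Suc k. \<forall>B\<in>S. orth v (z l) (char_vec B)" using o Suc.prems by auto
  have ne: "\<And>p. fib v z (Suc k) p \<noteq> {}" using full_image[OF v AIk STS_LC[OF S ok]] .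
  have eqc: "card (fib v z (Suc k) q) = card (fib v z (Suc k) p)" for q
    using fib_le[OF S ok ne, of q p] fib_le[OF S ok ne, of p q] by simp
  have "card (fib v z k p) = (\<Sum>u\<in>(UNIV::3 set). card (fib v z (Suc k) p))"
    unfolding fib_split[of v z k p] by (rule sum.cong[OF refl]) (rule eqc)
  also have "\<dots> = 3 * card (fib v z (Suc k) p)" by simp
  finally have "card (fib v z k p) = 3 * card (fib v z (Suc k) p)" .
  moreover have "card (fib v z k p) * 3 ^ k = v" using Suc.IH[of p] Suc.prems by simp
  moreover have "card (fib v z (Suc k) p) * 3 ^ Suc k = (3 * card (fib v z (Suc k) p)) * 3 ^ k"
    by (simp only: power_Suc mult_ac)
  ultimately show ?case by simp
qed



lemma AIndD: "AInd v z n \<Longrightarrow> (\<And>t. t \<in> {1..v} \<Longrightarrow> c0 + (\<Sum>l<n. c l * z l t) = 0) \<Longrightarrow> c0 = 0 \<and> (\<forall>l<n. c l = 0)"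
  unfolding AInd_def by blast

lemma span3_card:
  assumes LI: "lin_indep3 B"
  shows "finite (span3 B) \<and> card (span3 B) = 3 ^ card B"
proof -
  have fB: "finite B" using LI unfolding lin_indep3_def by simp
  define F where "F c = (\<lambda>t. \<Sum>b\<in>B. c b * b t)" for c :: "gf3vec \<Rightarrow> 3"
  have sp: "span3 B = F ` (B \<rightarrow>\<^sub>E (UNIV::3 set))"
  proof
    show "span3 B \<subseteq> F ` (B \<rightarrow>\<^sub>E UNIV)"
    proof
      fix u assume "u \<in> span3 B"
      then obtain c where u: "u = F c" unfolding span3_def F_def by blast
      have "F c = F (restrict c B)" unfolding F_def by (intro ext sum.cong) auto
      moreover have "restrict c B \<in> B \<rightarrow>\<^sub>E UNIV" by simp
      ultimately show "u \<in> F ` (B \<rightarrow>\<^sub>E UNIV)" using u by blast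
    qed
    show "F ` (B \<rightarrow>\<^sub>E UNIV) \<subseteq> span3 B" unfolding span3_def F_def by blast
  qed
  have inj: "inj_on F (B \<rightarrow>\<^sub>E UNIV)"
  proof (rule inj_onI)
    fix c c' assume c: "c \<in> B \<rightarrow>\<^sub>E UNIV" and c': "c' \<in> B \<rightarrow>\<^sub>E UNIV" and eq: "F c = F c'"
    have LI2: "\<And>cc. (\<lambda>t. \<Sum>b\<in>B. cc b * b t) = (\<lambda>t. 0) \<Longrightarrow> \<forall>b\<in>B. cc b = 0"
      using LI unfolding lin_indep3_def by blast
    have "(\<lambda>t. \<Sum>b\<in>B. (\<lambda>b. c b - c' b) b * b t) = (\<lambda>t. 0)"
    proof
      fix t
      have "(\<Sum>b\<in>B. (c b - c' b) * b t) = (\<Sum>b\<in>B. c b * b t) - (\<Sum>b\<in>B. c' b * b t)"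
        by (simp add: algebra_simps sum_subtractf)
      also have "\<dots> = 0" using fun_cong[OF eq, of t] unfolding F_def by simp
      finally show "(\<Sum>b\<in>B. (\<lambda>b. c b - c' b) b * b t) = 0" by simp
    qed
    then have "\<forall>b\<in>B. (\<lambda>b. c b - c' b) b = 0" by (rule LI2)
    then have "\<forall>b\<in>B. c b = c' b" by simp
    then show "c = c'" using c c' by (metis PiE_ext)
  qed
  have "card (span3 B) = card (B \<rightarrow>\<^sub>E (UNIV::3 set))" unfolding sp by (rule card_image[OF inj])
  also have "\<dots> = 3 ^ card B" by (simp add: card_PiE fB)
  finally show ?thesis using sp fB by (simp add: finite_PiE)
qed

lemma subspace_dim_card:
  assumes "subspace_dim v D k"
  shows "finite D" "card D = 3 ^ k"
proof -
  obtain B where B: "lin_indep3 B" "span3 B = D" "card B = k"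
    using assms unfolding subspace_dim_def by blast
  show "finite D" "card D = 3 ^ k" using span3_card[OF B(1)] B by auto
qed

lemma greedy:
  assumes v: "1 \<le> v" and D: "subspace3 v D" "all_one v \<in> D" "finite D" "card D = 3 ^ Suc k"
  shows "\<exists>x. Ind v x k \<and> (\<forall>l. k \<le> l \<longrightarrow> x l = (\<lambda>_. 0)) \<and> (\<forall>l<k. x l \<in> D) \<and> Sp v x k = D"
proof -
  have "m \<le> k \<Longrightarrow> \<exists>x. Ind v x m \<and> (\<forall>l. m \<le> l \<longrightarrow> x l = (\<lambda>_. 0)) \<and> (\<forall>l<m. x l \<in> D)" for m
  proof (induction m)
    case 0
    show ?case by (rule exI[of _ "\<lambda>_. (\<lambda>_. 0)"]) (simp add: Ind_def)
  next
    case (Suc m)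
    then obtain x where x: "Ind v x m" "\<forall>l. m \<le> l \<longrightarrow> x l = (\<lambda>_. 0)" "\<forall>l<m. x l \<in> D" by auto
    have sub: "Sp v x m \<subseteq> D" using Sp_subset[OF D(1) D(2)] x(3) by blast
    have "card (Sp v x m) = 3 ^ Suc m" using card_Sp[OF v x(1)] .
    moreover have "(3::nat) ^ Suc m < 3 ^ Suc k" using Suc.prems by (intro power_strict_increasing) auto
    ultimately have "Sp v x m \<noteq> D" using D(4) by auto
    then obtain y where y: "y \<in> D" "y \<notin> Sp v x m" using sub by blast
    define x' where "x' = x(m := y)"
    have same: "\<And>l. l < m \<Longrightarrow> x' l = x l" unfolding x'_def by simp
    have "Ind v x' m" using x(1) Ind_cong[of m x' x v] same by simp
    moreover have "x' m \<notin> Sp v x' m" using y(2) Sp_cong[of m x' x v] same by (simp add: x'_def)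
    ultimately have "Ind v x' (Suc m)" using Ind_Suc by blast
    moreover have "\<forall>l. Suc m \<le> l \<longrightarrow> x' l = (\<lambda>_. 0)" using x(2) unfolding x'_def by auto
    moreover have "\<forall>l<Suc m. x' l \<in> D" using x(3) y(1) unfolding x'_def by (auto simp: less_Suc_eq)
    ultimately show ?case by blast
  qed
  then obtain x where x: "Ind v x k" "\<forall>l. k \<le> l \<longrightarrow> x l = (\<lambda>_. 0)" "\<forall>l<k. x l \<in> D" by blast
  have sub: "Sp v x k \<subseteq> D" using Sp_subset[OF D(1) D(2)] x(3) by blast
  have "card (Sp v x k) = card D" using card_Sp[OF v x(1)] D(4) by simp
  then have "Sp v x k = D" using card_subset_eq[OF D(3) sub] by simp
  then show ?thesis using x by blast
qed

lemma basis_dim: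
  assumes v: "1 \<le> v" and z: "\<And>l. l < n \<Longrightarrow> z l \<in> vecs v" and A: "AInd v z n"
  shows "subspace_dim v (Sp v z n) (Suc n)"
proof -
  define B where "B = insert (all_one v) (z ` {..<n})"
  have injz: "inj_on z {..<n}"
  proof (rule inj_onI)
    fix l l' assume l: "l \<in> {..<n}" and l': "l' \<in> {..<n}" and eq: "z l = z l'"
    show "l = l'"
    proof (rule ccontr)
      assume ne: "l \<noteq> l'"
      define c where "c k = (if k = l then 1 else if k = l' then -1 else (0::3))" for k
      have "(\<Sum>k<n. c k * z k t) = 0" for t
      proof -
        have "(\<Sum>k<n. c k * z k t) = (\<Sum>k<n. (if k = l then z l t else 0) + (if k = l' then - z l' t else 0))"
          by (rule sum.cong) (auto simp: c_def ne)
        also have "\<dots> = z l t - z l' t" using l l' by (simp add: sum.distrib sum.delta)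
        finally show ?thesis using eq by simp
      qed
      then have "\<forall>t\<in>{1..v}. (0::3) + (\<Sum>k<n. c k * z k t) = 0" by simp
      then have "(0::3) = 0 \<and> (\<forall>k<n. c k = 0)" using A unfolding AInd_def by blast
      then have "c l = 0" using l by simp
      then show False by (simp add: c_def)
    qed
  qed
  have notin: "all_one v \<notin> z ` {..<n}"
  proof
    assume "all_one v \<in> z ` {..<n}"
    then obtain l where l: "l < n" "z l = all_one v" by auto
    define c where "c k = (if k = l then (1::3) else 0)" for k
    have "(- 1) + (\<Sum>k<n. c k * z k t) = 0" if t: "t \<in> {1..v}" for t
    proof -
      have "(\<Sum>k<n. c k * z k t) = (\<Sum>k<n. if k = l then z l t else 0)"
        by (rule sum.cong) (auto simp: c_def)
      also have "\<dots> = 1" using l t by (simp add: sum.delta all_one_def)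
      finally show ?thesis by simp
    qed
    then have "(- 1 :: 3) = 0" using A unfolding AInd_def by blast
    then show False by simp
  qed
  have cardB: "card B = Suc n" unfolding B_def using notin injz by (simp add: card_image)
  have finB: "finite B" unfolding B_def by simp
  have sumB: "(\<Sum>b\<in>B. cf b * b t) = cf (all_one v) * all_one v t + (\<Sum>l<n. cf (z l) * z l t)" for cf t
  proof -
    have "(\<Sum>b\<in>B. cf b * b t) = cf (all_one v) * all_one v t + (\<Sum>b\<in>z ` {..<n}. cf b * b t)"
      unfolding B_def using notin by (simp add: sum.insert)
    also have "(\<Sum>b\<in>z ` {..<n}. cf b * b t) = (\<Sum>l<n. cf (z l) * z l t)"
      using injz by (simp add: sum.reindex)
    finally show ?thesis .
  qed
  have span: "span3 B = Sp v z n"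
  proof
    show "span3 B \<subseteq> Sp v z n"
    proof
      fix u assume "u \<in> span3 B"
      then obtain cf where u: "u = (\<lambda>t. \<Sum>b\<in>B. cf b * b t)" unfolding span3_def by blast
      show "u \<in> Sp v z n"
        by (rule SpI[where cc="cf (all_one v)" and c="\<lambda>l. cf (z l)"]) (simp add: u sumB)
    qed
    show "Sp v z n \<subseteq> span3 B"
    proof
      fix u assume "u \<in> Sp v z n"
      then obtain c0 c where u: "u = (\<lambda>t. c0 * all_one v t + (\<Sum>l<n. c l * z l t))" by (rule SpE)
      define cf where "cf b = (if b = all_one v then c0 else c (inv_into {..<n} z b))" for b
      have "cf (z l) = c l" if "l < n" for l
      proof -
        have "z l \<noteq> all_one v" using notin that by (metis image_eqI lessThan_iff)
        then show ?thesis unfolding cf_def using inv_into_f_f[OF injz] that by simp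
      qed
      then have "(\<Sum>l<n. cf (z l) * z l t) = (\<Sum>l<n. c l * z l t)" for t by (intro sum.cong) auto
      then have "u = (\<lambda>t. \<Sum>b\<in>B. cf b * b t)" unfolding u sumB by (simp add: cf_def)
      then show "u \<in> span3 B" unfolding span3_def by blast
    qed
  qed
  have LI: "lin_indep3 B"
    unfolding lin_indep3_def
  proof (intro conjI finB allI impI)
    fix cf assume h: "(\<lambda>t. \<Sum>b\<in>B. cf b * b t) = (\<lambda>t. 0)"
    have "\<forall>t\<in>{1..v}. cf (all_one v) + (\<Sum>l<n. cf (z l) * z l t) = 0"
    proof
      fix t assume t: "t \<in> {1..v}"
      have "(\<Sum>b\<in>B. cf b * b t) = 0" using fun_cong[OF h, of t] by simp
      then show "cf (all_one v) + (\<Sum>l<n. cf (z l) * z l t) = 0" using t sumB[of cf t] by (simp add: all_one_def)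
    qed
    then have "cf (all_one v) = 0 \<and> (\<forall>l<n. (\<lambda>l. cf (z l)) l = 0)"
      by (intro AIndD[OF A]) blast
    then show "\<forall>b\<in>B. cf b = 0" unfolding B_def by auto
  qed
  have BS: "B \<subseteq> Sp v z n" unfolding B_def using all_one_Sp z_in_Sp by blast
  have "subspace3 v (Sp v z n)" by (rule Sp_subspace3) (rule z)
  then show ?thesis unfolding subspace_dim_def
    using BS LI span cardB by blast
qed


lemma transport:
  assumes v: "1 \<le> v" and S0: "is_STS v S0" and orth0: "\<forall>w\<in>Sp v z0 n. \<forall>B\<in>S0. orth v w (char_vec B)"
   and cards: "\<And>p. card (fib v z n p) = card (fib v z0 n p)"
  shows "\<exists>S. is_STS v S \<and> (\<forall>w\<in>Sp v z n. \<forall>B\<in>S. orth v w (char_vec B))"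
proof -
  define pt where "pt t = (\<lambda>l. if l < n then z l t else 0)" for t
  have "\<exists>f. bij_betw f (fib v z n p) (fib v z0 n p)" for p
    using cards[of p] by (intro finite_same_card_bij finite_fib)
  then have "\<forall>p. \<exists>f. bij_betw f (fib v z n p) (fib v z0 n p)" by blast
  then have "\<exists>f. \<forall>p. bij_betw (f p) (fib v z n p) (fib v z0 n p)" by (rule choice)
  then obtain f where f: "\<And>p. bij_betw (f p) (fib v z n p) (fib v z0 n p)" by blast
  define \<sigma> where "\<sigma> t = f (pt t) t" for t
  have tfib: "t \<in> fib v z n (pt t)" if "t \<in> {1..v}" for t using that unfolding fib_def pt_def by auto
  have \<sigma>fib: "\<sigma> t \<in> fib v z0 n (pt t)" if "t\<in>{1..v}" for t
    using bij_betwE[OF f] tfib[OF that] unfolding \<sigma>_def by blast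
  have \<sigma>v: "\<sigma> t \<in> {1..v}" if "t \<in> {1..v}" for t
    using \<sigma>fib[OF that] unfolding fib_def by auto
  have \<sigma>z: "z0 l (\<sigma> t) = z l t" if "t \<in> {1..v}" "l < n" for t l
    using \<sigma>fib[OF that(1)] that(2) unfolding fib_def pt_def by auto
  have inj: "inj_on \<sigma> {1..v}"
  proof (rule inj_onI)
    fix t t' assume t: "t\<in>{1..v}" and t': "t'\<in>{1..v}" and eq: "\<sigma> t = \<sigma> t'"
    have "z l t = z l t'" if "l < n" for l using \<sigma>z[OF t that] \<sigma>z[OF t' that] eq by simp
    then have ptt: "pt t = pt t'" unfolding pt_def by (auto simp: fun_eq_iff)
    then have "f (pt t) t = f (pt t) t'" using eq unfolding \<sigma>_def by simp
    moreover have "t' \<in> fib v z n (pt t)" using tfib[OF t'] ptt by simp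
    moreover have "inj_on (f (pt t)) (fib v z n (pt t))" using f[of "pt t"] unfolding bij_betw_def by blast
    ultimately show "t = t'" using tfib[OF t] unfolding inj_on_def by blast
  qed
  have img: "\<sigma> ` {1..v} = {1..v}"
  proof -
    have "\<sigma> ` {1..v} \<subseteq> {1..v}" using \<sigma>v by blast
    moreover have "card (\<sigma> ` {1..v}) = card {1..v}" using card_image[OF inj] .
    ultimately show ?thesis using card_subset_eq[of "{1..v}" "\<sigma> ` {1..v}"] by simp
  qed
  define S where "S = {B. B \<subseteq> {1..v} \<and> \<sigma> ` B \<in> S0}"
  have STS: "is_STS v S"
    unfolding is_STS_def
  proof (intro conjI allI impI ballI)
    fix B assume "B \<in> S"
    then have B: "B \<subseteq> {1..v}" "\<sigma> ` B \<in> S0" unfolding S_def by auto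
    show "B \<subseteq> {1..v}" by (rule B(1))
    have "card (\<sigma> ` B) = card B" by (rule card_image[OF inj_on_subset[OF inj B(1)]])
    then show "card B = 3" using STS_block[OF S0 B(2)] by simp
  next
    fix P assume P: "P \<subseteq> {1..v} \<and> card P = 2"
    have "card (\<sigma> ` P) = card P" using P by (intro card_image[OF inj_on_subset[OF inj]]) auto
    then have sP: "\<sigma> ` P \<subseteq> {1..v}" "card (\<sigma> ` P) = 2" using P \<sigma>v by auto
    obtain B0 where B0: "B0 \<in> S0 \<and> \<sigma> ` P \<subseteq> B0" and uq: "\<forall>y. y \<in> S0 \<and> \<sigma> ` P \<subseteq> y \<longrightarrow> y = B0"
      using STS_pair[OF S0 sP] by (rule ex1E) blast
    have B0v: "B0 \<subseteq> {1..v}" using STS_block[OF S0] B0 by blast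
    define B where "B = {t\<in>{1..v}. \<sigma> t \<in> B0}"
    have \<sigma>B: "\<sigma> ` B = B0"
    proof
      show "\<sigma> ` B \<subseteq> B0" unfolding B_def by auto
      show "B0 \<subseteq> \<sigma> ` B"
      proof
        fix s assume s: "s \<in> B0"
        then have "s \<in> \<sigma> ` {1..v}" using B0v img by auto
        then obtain t where "t \<in> {1..v}" "s = \<sigma> t" by auto
        then show "s \<in> \<sigma> ` B" unfolding B_def using s by auto
      qed
    qed
    have BS: "B \<in> S" unfolding S_def using \<sigma>B B0 unfolding B_def by auto
    have PB: "P \<subseteq> B" using P B0 unfolding B_def by auto
    show "\<exists>!b. b \<in> S \<and> P \<subseteq> b"
    proof (rule ex1I[of _ B])
      show "B \<in> S \<and> P \<subseteq> B" using BS PB by simp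
      fix B' assume "B' \<in> S \<and> P \<subseteq> B'"
      then have B': "B' \<subseteq> {1..v}" "\<sigma> ` B' \<in> S0" "P \<subseteq> B'" unfolding S_def by auto
      have "\<sigma> ` B' = B0" using uq B'(2) B'(3) by blast
      show "B' = B"
      proof
        show "B' \<subseteq> B" using B'(1) \<open>\<sigma> ` B' = B0\<close> unfolding B_def by auto
        show "B \<subseteq> B'"
        proof
          fix t assume t: "t \<in> B"
          then have "\<sigma> t \<in> \<sigma> ` B'" using \<open>\<sigma> ` B' = B0\<close> unfolding B_def by auto
          then obtain t' where t': "t' \<in> B'" "\<sigma> t = \<sigma> t'" by auto
          have "t = t'" using inj t t' B'(1) unfolding inj_on_def B_def by blast
          then show "t \<in> B'" using t' by simp
        qed
      qed
    qed
  qed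
  have "\<forall>w\<in>Sp v z n. \<forall>B\<in>S. orth v w (char_vec B)"
  proof (intro ballI)
    fix w B assume w: "w \<in> Sp v z n" and B: "B \<in> S"
    obtain c0 c where wdef: "w = (\<lambda>t. c0 * all_one v t + (\<Sum>l<n. c l * z l t))" using w by (rule SpE)
    define w0 where "w0 = (\<lambda>t. c0 * all_one v t + (\<Sum>l<n. c l * z0 l t))"
    have w0S: "w0 \<in> Sp v z0 n" unfolding w0_def by (rule SpI) simp
    have B': "B \<subseteq> {1..v}" "\<sigma> ` B \<in> S0" using B unfolding S_def by auto
    have eqw: "w t = w0 (\<sigma> t)" if "t \<in> {1..v}" for t
    proof -
      have "(\<Sum>l<n. c l * z l t) = (\<Sum>l<n. c l * z0 l (\<sigma> t))" using \<sigma>z[OF that] by (intro sum.cong) auto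
      moreover have "all_one v t = all_one v (\<sigma> t)" using that \<sigma>v[OF that] by (simp add: all_one_def)
      ultimately show ?thesis unfolding wdef w0_def by simp
    qed
    have "(\<Sum>t\<in>B. w t) = (\<Sum>t\<in>B. w0 (\<sigma> t))" using eqw B'(1) by (intro sum.cong) auto
    also have "\<dots> = (\<Sum>s\<in>\<sigma> ` B. w0 s)" using sum.reindex[OF inj_on_subset[OF inj B'(1)], of w0] by simp
    also have "\<dots> = 0"
    proof -
      have "orth v w0 (char_vec (\<sigma> ` B))" using orth0 w0S B'(2) by blast
      then show ?thesis using orth_block[of "\<sigma> ` B" v w0] STS_block(1)[OF S0 B'(2)] by simp
    qed
    finally show "orth v w (char_vec B)" using orth_block[OF B'(1)] by simp
  qed
  then show ?thesis using STS by blast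
qed


lemma card_ext:
  assumes fA: "finite A" and A0: "\<And>z. z \<in> A \<Longrightarrow> z n = d0"
    and fF: "\<And>z. z \<in> A \<Longrightarrow> finite (F z)" and cF: "\<And>z. z \<in> A \<Longrightarrow> card (F z) = k"
  shows "card {z(n:=y) | z y. z \<in> A \<and> y \<in> F z} = card A * k"
    and "finite {z(n:=y) | z y. z \<in> A \<and> y \<in> F z}"
proof -
  have eq: "{z(n:=y) | z y. z \<in> A \<and> y \<in> F z} = (\<lambda>(z,y). z(n:=y)) ` Sigma A F" by auto
  have inj: "inj_on (\<lambda>(z,y). z(n:=y)) (Sigma A F)"
  proof (rule inj_onI, clarify)
    fix z y z' y' assume z: "z \<in> A" "y \<in> F z" and z': "z' \<in> A" "y' \<in> F z'" and e: "z(n:=y) = z'(n:=y')"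
    have "y = y'" using fun_cong[OF e, of n] by simp
    moreover have "z = z'"
    proof
      fix l show "z l = z' l"
        using fun_cong[OF e, of l] A0[OF z(1)] A0[OF z'(1)] by (cases "l = n") auto
    qed
    ultimately show "z = z' \<and> y = y'" by simp
  qed
  have "card {z(n:=y) | z y. z \<in> A \<and> y \<in> F z} = card (Sigma A F)" unfolding eq by (rule card_image[OF inj])
  also have "\<dots> = (\<Sum>z\<in>A. card (F z))" using fA fF by (simp add: card_SigmaI)
  also have "\<dots> = card A * k" using cF by simp
  finally show "card {z(n:=y) | z y. z \<in> A \<and> y \<in> F z} = card A * k" .
  show "finite {z(n:=y) | z y. z \<in> A \<and> y \<in> F z}" unfolding eq using fA fF by auto
qed

lemma count_split3:
  assumes fF: "finite F" and cF: "card F = 3 * m"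
  shows "card {g \<in> F \<rightarrow>\<^sub>E (UNIV::3 set). \<forall>u. card {t\<in>F. g t = u} = m} = ((3*m) choose m) * ((2*m) choose m)"
proof -
  define H where "H = {g \<in> F \<rightarrow>\<^sub>E (UNIV::3 set). \<forall>u. card {t\<in>F. g t = u} = m}"
  define P where "P = Sigma {A0. A0 \<subseteq> F \<and> card A0 = m} (\<lambda>A0. {A1. A1 \<subseteq> F - A0 \<and> card A1 = m})"
  define \<Phi> where "\<Phi> g = ({t\<in>F. g t = 0}, {t\<in>F. g t = (1::3)})" for g
  have inj: "inj_on \<Phi> H"
  proof (rule inj_onI)
    fix g g' assume g: "g \<in> H" and g': "g' \<in> H" and e: "\<Phi> g = \<Phi> g'"
    have e0: "{t\<in>F. g t = 0} = {t\<in>F. g' t = 0}" and e1: "{t\<in>F. g t = 1} = {t\<in>F. g' t = 1}"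
      using e unfolding \<Phi>_def by auto
    have "g t = g' t" if t: "t \<in> F" for t
    proof -
      have "g t = 0 \<longleftrightarrow> g' t = 0" using e0 t by blast
      moreover have "g t = 1 \<longleftrightarrow> g' t = 1" using e1 t by blast
      ultimately show ?thesis using three_cases[of "g t"] three_cases[of "g' t"] by auto
    qed
    then show "g = g'" using g g' unfolding H_def by (metis (mono_tags, lifting) PiE_ext mem_Collect_eq)
  qed
  have img: "\<Phi> ` H = P"
  proof
    show "\<Phi> ` H \<subseteq> P"
    proof
      fix x assume "x \<in> \<Phi> ` H"
      then obtain g where g: "g \<in> H" "x = \<Phi> g" by auto
      have c0: "card {t\<in>F. g t = 0} = m" and c1: "card {t\<in>F. g t = 1} = m" using g(1) unfolding H_def by auto
      have "{t\<in>F. g t = 1} \<subseteq> F - {t\<in>F. g t = 0}" by auto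
      then show "x \<in> P" unfolding P_def g(2) \<Phi>_def using c0 c1 by auto
    qed
    show "P \<subseteq> \<Phi> ` H"
    proof
      fix x assume "x \<in> P"
      then obtain A0 A1 where x: "x = (A0, A1)" and A0: "A0 \<subseteq> F" "card A0 = m" and A1: "A1 \<subseteq> F - A0" "card A1 = m"
        unfolding P_def by auto
      define g where "g = (\<lambda>t\<in>F. if t \<in> A0 then 0 else if t \<in> A1 then 1 else (2::3))"
      have s0: "{t\<in>F. g t = 0} = A0" using A0 A1 unfolding g_def by auto
      have s1: "{t\<in>F. g t = 1} = A1" using A0 A1 unfolding g_def by auto
      have s2: "{t\<in>F. g t = 2} = F - A0 - A1" using A0 A1 unfolding g_def by auto
      have "card (F - A0 - A1) = card F - card A0 - card A1"
      proof -
        have "card (F - A0 - A1) = card (F - A0) - card A1"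
          using A1 fF by (meson card_Diff_subset finite_Diff finite_subset)
        moreover have "card (F - A0) = card F - card A0" using A0 fF by (meson card_Diff_subset finite_subset)
        ultimately show ?thesis by simp
      qed
      then have c2: "card {t\<in>F. g t = 2} = m" using s2 cF A0 A1 by simp
      have "\<forall>u. card {t\<in>F. g t = u} = m"
      proof
        fix u :: 3
        show "card {t\<in>F. g t = u} = m" using three_cases[of u] s0 s1 c2 A0 A1 by auto
      qed
      moreover have "g \<in> F \<rightarrow>\<^sub>E UNIV" unfolding g_def by simp
      ultimately have "g \<in> H" unfolding H_def by simp
      moreover have "\<Phi> g = x" unfolding \<Phi>_def x using s0 s1 by simp
      ultimately show "x \<in> \<Phi> ` H" by blast
    qed
  qed
  have "card H = card P" using card_image[OF inj] img by simp
  also have "card P = (\<Sum>A0\<in>{A0. A0 \<subseteq> F \<and> card A0 = m}. card {A1. A1 \<subseteq> F - A0 \<and> card A1 = m})"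
    unfolding P_def using fF by (intro card_SigmaI) auto
  also have "\<dots> = (\<Sum>A0\<in>{A0. A0 \<subseteq> F \<and> card A0 = m}. (2*m) choose m)"
  proof (rule sum.cong[OF refl])
    fix A0 assume "A0 \<in> {A0. A0 \<subseteq> F \<and> card A0 = m}"
    then have A0: "A0 \<subseteq> F" "card A0 = m" by auto
    have "card (F - A0) = 2 * m" using A0 cF fF by (simp add: card_Diff_subset finite_subset)
    moreover have "finite (F - A0)" using fF by simp
    ultimately show "card {A1. A1 \<subseteq> F - A0 \<and> card A1 = m} = (2*m) choose m" using n_subsets[of "F - A0" m] by simp
  qed
  also have "\<dots> = ((3*m) choose m) * ((2*m) choose m)" using n_subsets[OF fF, of m] cF by simp
  finally show ?thesis unfolding H_def .
qed

lemma choose_fact3: "real (((3*m) choose m) * ((2*m) choose m)) = fact (3*m) / (fact m) ^ 3"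
proof -
  have a: "real ((3*m) choose m) = fact (3*m) / (fact m * fact (2*m))"
    using binomial_fact[of m "3*m"] by simp
  have b: "real ((2*m) choose m) = fact (2*m) / (fact m * fact m)"
    using binomial_fact[of m "2*m"] by simp
  show ?thesis unfolding of_nat_mult a b by (simp add: power3_eq_cube field_simps)
qed


lemma fib_zcong: "(\<And>l. l < k \<Longrightarrow> z l = z' l) \<Longrightarrow> fib v z k p = fib v z' k p"
  unfolding fib_def by auto

lemma fib_self: "t \<in> {1..v} \<Longrightarrow> t \<in> fib v z k (\<lambda>l. z l t)"
  unfolding fib_def by auto

lemma fib_same: "t \<in> fib v z k p \<Longrightarrow> fib v z k p = fib v z k (\<lambda>l. z l t)"
  unfolding fib_def by auto

lemma fib_upd_Suc: "fib v (z(k:=y)) (Suc k) p = {t \<in> fib v z k p. y t = p k}"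
proof -
  have "fib v (z(k:=y)) k p = fib v z k p" by (rule fib_zcong) simp
  then show ?thesis unfolding fib_Suc by simp
qed

lemma card_fibs:
  assumes s: "\<And>p. card (fib v z k p) = s" and s0: "0 < s"
  shows "card (range (fib v z k)) * s = v" and "finite (range (fib v z k))"
proof -
  have sub: "range (fib v z k) \<subseteq> Pow {1..v}" using fib_sub by blast
  show fin: "finite (range (fib v z k))" using finite_subset[OF sub] by simp
  have U: "\<Union>(range (fib v z k)) = {1..v}" using fib_self fib_sub by blast
  have disj: "pairwise disjnt (range (fib v z k))"
    unfolding pairwise_def disjnt_def
  proof (intro ballI impI)
    fix A B assume A: "A \<in> range (fib v z k)" and B: "B \<in> range (fib v z k)" and ne: "A \<noteq> B"
    show "A \<inter> B = {}"
    proof (rule ccontr)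
      assume "A \<inter> B \<noteq> {}"
      then obtain t where t: "t \<in> A" "t \<in> B" by blast
      obtain p q where pq: "A = fib v z k p" "B = fib v z k q" using A B by blast
      have "A = B" using fib_same[of t v z k p] fib_same[of t v z k q] t pq by simp
      then show False using ne by simp
    qed
  qed
  have "v = card (\<Union>(range (fib v z k)))" using U by simp
  also have "\<dots> = sum card (range (fib v z k))"
    by (rule card_Union_disjoint[OF disj]) (auto simp: finite_fib)
  also have "\<dots> = (\<Sum>F\<in>range (fib v z k). s)" by (rule sum.cong) (auto simp: s)
  also have "\<dots> = card (range (fib v z k)) * s" by simp
  finally show "card (range (fib v z k)) * s = v" by simp
qed

lemma count_G:
  assumes fibz: "\<And>p. card (fib v z k p) = 3 * mm" and nf: "card (range (fib v z k)) = N"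
    and fin: "finite (range (fib v z k))"
  shows "card {y \<in> vecs v. \<forall>p. card (fib v (z(k:=y)) (Suc k) p) = mm}
           = (((3*mm) choose mm) * ((2*mm) choose mm)) ^ N"
proof -
  define FF where "FF = range (fib v z k)"
  define H where "H F = {g \<in> F \<rightarrow>\<^sub>E (UNIV::3 set). \<forall>u. card {t\<in>F. g t = u} = mm}" for F :: "nat set"
  define G where "G = {y \<in> vecs v. \<forall>p. card (fib v (z(k:=y)) (Suc k) p) = mm}"
  have charG: "(\<forall>p. card (fib v (z(k:=y)) (Suc k) p) = mm) \<longleftrightarrow> (\<forall>F\<in>FF. \<forall>u. card {t\<in>F. y t = u} = mm)" for y
  proof
    assume h: "\<forall>p. card (fib v (z(k:=y)) (Suc k) p) = mm"
    show "\<forall>F\<in>FF. \<forall>u. card {t\<in>F. y t = u} = mm"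
    proof (intro ballI allI)
      fix F u assume "F \<in> FF"
      then obtain p where F: "F = fib v z k p" unfolding FF_def by auto
      have "fib v z k (p(k:=u)) = fib v z k p" by (rule fib_cong) simp
      then have "fib v (z(k:=y)) (Suc k) (p(k:=u)) = {t\<in>F. y t = u}" unfolding fib_upd_Suc F by simp
      then show "card {t\<in>F. y t = u} = mm" using h by metis
    qed
  next
    assume h: "\<forall>F\<in>FF. \<forall>u. card {t\<in>F. y t = u} = mm"
    show "\<forall>p. card (fib v (z(k:=y)) (Suc k) p) = mm"
    proof
      fix p
      have "fib v z k p \<in> FF" unfolding FF_def by simp
      then show "card (fib v (z(k:=y)) (Suc k) p) = mm" unfolding fib_upd_Suc using h by blast
    qed
  qed
  have G: "G = {y \<in> vecs v. \<forall>F\<in>FF. \<forall>u. card {t\<in>F. y t = u} = mm}" unfolding G_def using charG by auto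
  define \<Phi> where "\<Phi> y = (\<lambda>F\<in>FF. restrict y F)" for y :: gf3vec
  have FFt: "fib v z k (\<lambda>l. z l t) \<in> FF" for t unfolding FF_def by simp
  have inj: "inj_on \<Phi> G"
  proof (rule inj_onI)
    fix y y' assume y: "y \<in> G" and y': "y' \<in> G" and e: "\<Phi> y = \<Phi> y'"
    show "y = y'"
    proof
      fix t
      show "y t = y' t"
      proof (cases "t \<in> {1..v}")
        case True
        have "\<Phi> y (fib v z k (\<lambda>l. z l t)) t = \<Phi> y' (fib v z k (\<lambda>l. z l t)) t" using e by simp
        then show ?thesis using FFt[of t] fib_self[OF True, of z k] unfolding \<Phi>_def by simp
      next
        case False
        then show ?thesis using y y' unfolding G vecs_def by auto
      qed
    qed
  qed
  have img: "\<Phi> ` G = PiE FF H"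
  proof
    show "\<Phi> ` G \<subseteq> PiE FF H"
    proof
      fix x assume "x \<in> \<Phi> ` G"
      then obtain y where y: "y \<in> G" "x = \<Phi> y" by auto
      have "restrict y F \<in> H F" if F: "F \<in> FF" for F
      proof -
        have e: "{t\<in>F. restrict y F t = u} = {t\<in>F. y t = u}" for u by auto
        have "\<forall>u. card {t\<in>F. y t = u} = mm" using y(1) F unfolding G by blast
        then have "\<forall>u. card {t\<in>F. restrict y F t = u} = mm" unfolding e .
        moreover have "restrict y F \<in> F \<rightarrow>\<^sub>E UNIV" by simp
        ultimately show ?thesis unfolding H_def by blast
      qed
      then have "(\<lambda>F\<in>FF. restrict y F) \<in> PiE FF H" by (simp add: restrict_PiE_iff)
      then show "x \<in> PiE FF H" unfolding y(2) \<Phi>_def .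
    qed
    show "PiE FF H \<subseteq> \<Phi> ` G"
    proof
      fix \<phi> assume \<phi>: "\<phi> \<in> PiE FF H"
      define y where "y t = (if t \<in> {1..v} then \<phi> (fib v z k (\<lambda>l. z l t)) t else 0)" for t
      have yF: "y t = \<phi> F t" if F: "F \<in> FF" and t: "t \<in> F" for F t
      proof -
        obtain p where Fp: "F = fib v z k p" using F unfolding FF_def by auto
        have "t \<in> {1..v}" using t Fp fib_sub by blast
        moreover have "fib v z k (\<lambda>l. z l t) = F" using fib_same[of t v z k p] t Fp by simp
        ultimately show ?thesis unfolding y_def by simp
      qed
      have resF: "restrict y F = \<phi> F" if F: "F \<in> FF" for F
      proof
        fix t show "restrict y F t = \<phi> F t"
        proof (cases "t \<in> F")
          case True then show ?thesis using yF[OF F] by simp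
        next
          case False
          have "\<phi> F \<in> H F" by (rule PiE_mem[OF \<phi> F])
          then have "\<phi> F \<in> F \<rightarrow>\<^sub>E UNIV" unfolding H_def by simp
          then have "\<phi> F t = undefined" by (rule PiE_arb[OF _ False])
          then show ?thesis using False by simp
        qed
      qed
      have "\<Phi> y = \<phi>"
      proof
        fix F show "\<Phi> y F = \<phi> F"
        proof (cases "F \<in> FF")
          case True then show ?thesis unfolding \<Phi>_def using resF by simp
        next
          case False
          then have "\<phi> F = undefined" by (rule PiE_arb[OF \<phi>])
          then show ?thesis unfolding \<Phi>_def using False by simp
        qed
      qed
      moreover have "y \<in> G"
      proof -
        have "y \<in> vecs v" unfolding vecs_def y_def by auto
        moreover have "\<forall>F\<in>FF. \<forall>u. card {t\<in>F. y t = u} = mm"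
        proof (intro ballI allI)
          fix F u assume F: "F \<in> FF"
          have "{t\<in>F. y t = u} = {t\<in>F. \<phi> F t = u}" using yF[OF F] by auto
          moreover have "\<phi> F \<in> H F" by (rule PiE_mem[OF \<phi> F])
          ultimately show "card {t\<in>F. y t = u} = mm" unfolding H_def by simp
        qed
        ultimately show ?thesis unfolding G by simp
      qed
      ultimately show "\<phi> \<in> \<Phi> ` G" by (metis image_eqI)
    qed
  qed
  have cH: "card (H F) = ((3*mm) choose mm) * ((2*mm) choose mm)" if F: "F \<in> FF" for F
  proof -
    obtain p where Fp: "F = fib v z k p" using F unfolding FF_def by auto
    show ?thesis unfolding H_def Fp by (rule count_split3[OF finite_fib fibz])
  qed
  have "card G = card (PiE FF H)" using card_image[OF inj] img by simp
  also have "\<dots> = (\<Prod>F\<in>FF. card (H F))" using fin unfolding FF_def by (simp add: card_PiE)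
  also have "\<dots> = (((3*mm) choose mm) * ((2*mm) choose mm)) ^ N"
    using cH nf unfolding FF_def by simp
  finally show ?thesis unfolding G_def .
qed


lemma geo3: "(\<Sum>r<n. (3::real) ^ r) * 2 = 3 ^ n - 1"
  by (induction n) (simp_all add: algebra_simps)

lemma qfact_Suc: "qfact q (Suc d) = qfact q d * (\<Sum>r<Suc d. q ^ r)"
  unfolding qfact_def by (simp add: prod.nat_ivl_Suc' mult.commute)

lemma exp_step: "(2*i+(Suc d)+1)*(Suc d) div 2 = (i+1) + (2*(i+1)+d+1)*d div 2"
proof -
  have "(2*i+(Suc d)+1)*(Suc d) = 2*(i+1) + (2*(i+1)+d+1)*d" by (simp add: algebra_simps)
  then show ?thesis by simp
qed

lemma Q_formula:
  "(\<Prod>l\<in>{i..<i+d}. ((3::real) ^ (i+d+1) - 3 ^ (l+1))) = 3 ^ ((2*i+d+1)*d div 2) * 2 ^ d * qfact 3 d"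
proof (induction d arbitrary: i)
  case 0
  then show ?case by (simp add: qfact_def)
next
  case (Suc d)
  have "(\<Prod>l\<in>{i..<i+Suc d}. ((3::real) ^ (i+Suc d+1) - 3 ^ (l+1)))
      = (3 ^ (i+Suc d+1) - 3 ^ (i+1)) * (\<Prod>l\<in>{Suc i..<i+Suc d}. ((3::real) ^ (i+Suc d+1) - 3 ^ (l+1)))"
    by (rule prod.atLeast_Suc_lessThan) simp
  also have "{Suc i..<i+Suc d} = {(i+1)..<(i+1)+d}" by simp
  also have "(\<Prod>l\<in>{(i+1)..<(i+1)+d}. ((3::real) ^ (i+Suc d+1) - 3 ^ (l+1)))
      = (\<Prod>l\<in>{(i+1)..<(i+1)+d}. ((3::real) ^ ((i+1)+d+1) - 3 ^ (l+1)))" by simp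
  also have "\<dots> = 3 ^ ((2*(i+1)+d+1)*d div 2) * 2 ^ d * qfact 3 d" by (rule Suc.IH)
  also have "(3::real) ^ (i+Suc d+1) - 3 ^ (i+1) = 3 ^ (i+1) * (3 ^ (Suc d) - 1)"
    by (simp add: algebra_simps power_add)
  also have "(3::real) ^ (Suc d) - 1 = 2 * (\<Sum>r<Suc d. 3 ^ r)" using geo3[of "Suc d"] by simp
  finally have "(\<Prod>l\<in>{i..<i+Suc d}. ((3::real) ^ (i+Suc d+1) - 3 ^ (l+1)))
      = (3 ^ (i+1) * 3 ^ ((2*(i+1)+d+1)*d div 2)) * (2 * 2 ^ d) * (qfact 3 d * (\<Sum>r<Suc d. 3 ^ r))"
    by (simp add: algebra_simps)
  also have "\<dots> = 3 ^ ((2*i+(Suc d)+1)*(Suc d) div 2) * 2 ^ Suc d * qfact 3 (Suc d)"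
    unfolding exp_step qfact_Suc power_add by simp
  finally show ?case .
qed

lemma PI_formula:
  assumes "i \<le> j"
  shows "real (\<Prod>l\<in>{i..<j}. (3 ^ (j+1) - 3 ^ (l+1) :: nat)) = 3 ^ (((j+i+1)*(j-i)) div 2) * 2 ^ (j-i) * qfact 3 (j-i)"
proof -
  obtain d where j: "j = i + d" using assms le_Suc_ex by blast
  have "real (\<Prod>l\<in>{i..<j}. (3 ^ (j+1) - 3 ^ (l+1) :: nat)) = (\<Prod>l\<in>{i..<j}. real (3 ^ (j+1) - 3 ^ (l+1) :: nat))"
    by simp
  also have "\<dots> = (\<Prod>l\<in>{i..<j}. ((3::real) ^ (j+1) - 3 ^ (l+1)))"
  proof (rule prod.cong[OF refl])
    fix l assume "l \<in> {i..<j}"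
    then have "(3::nat) ^ (l+1) \<le> 3 ^ (j+1)" by (intro power_increasing) auto
    then show "real (3 ^ (j+1) - 3 ^ (l+1) :: nat) = (3::real) ^ (j+1) - 3 ^ (l+1)"
      by (simp add: of_nat_diff)
  qed
  also have "\<dots> = 3 ^ ((2*i+d+1)*d div 2) * 2 ^ d * qfact 3 d" unfolding j by (rule Q_formula)
  also have "(2*i+d+1)*d = (j+i+1)*(j-i)" unfolding j by (simp add: algebra_simps)
  finally show ?thesis unfolding j by simp
qed


definition BB :: "nat \<Rightarrow> (nat \<Rightarrow> gf3vec) \<Rightarrow> nat \<Rightarrow> (nat \<Rightarrow> nat) \<Rightarrow> nat \<Rightarrow> (nat \<Rightarrow> gf3vec) set" where
  "BB v x i m k = {z. (\<forall>l<i. z l = x l) \<and> (\<forall>l. k \<le> l \<longrightarrow> z l = (\<lambda>_. 0)) \<and>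
      (\<forall>l. i \<le> l \<and> l < k \<longrightarrow> z l \<in> vecs v) \<and> (\<forall>p. card (fib v z k p) = m k)}"

definition AA :: "nat \<Rightarrow> (nat \<Rightarrow> gf3vec) \<Rightarrow> nat \<Rightarrow> gf3vec set \<Rightarrow> nat \<Rightarrow> (nat \<Rightarrow> gf3vec) set" where
  "AA v x i E k = {z. (\<forall>l<i. z l = x l) \<and> (\<forall>l. k \<le> l \<longrightarrow> z l = (\<lambda>_. 0)) \<and>
      (\<forall>l. i \<le> l \<and> l < k \<longrightarrow> z l \<in> E \<and> z l \<notin> Sp v z l)}"

lemma BB_base:
  assumes x0: "\<forall>l. i \<le> l \<longrightarrow> x l = (\<lambda>_. 0)" and xi: "\<forall>p. card (fib v x i p) = m i"
  shows "BB v x i m i = {x}"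
proof
  show "BB v x i m i \<subseteq> {x}"
  proof
    fix z assume "z \<in> BB v x i m i"
    then have z: "\<forall>l<i. z l = x l" "\<forall>l. i \<le> l \<longrightarrow> z l = (\<lambda>_. 0)" unfolding BB_def by auto
    have "z = x"
    proof
      fix l show "z l = x l" using z x0 by (cases "l < i") auto
    qed
    then show "z \<in> {x}" by simp
  qed
  show "{x} \<subseteq> BB v x i m i" unfolding BB_def using x0 xi by auto
qed

lemma BB_step:
  assumes ik: "i \<le> k" and mk: "m k = 3 * m (Suc k)"
  shows "BB v x i m (Suc k) = {z(k:=y) | z y. z \<in> BB v x i m k \<and>
            y \<in> {y \<in> vecs v. \<forall>p. card (fib v (z(k:=y)) (Suc k) p) = m (Suc k)}}"
proof
  show "BB v x i m (Suc k) \<subseteq> {z(k:=y) | z y. z \<in> BB v x i m k \<and>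
            y \<in> {y \<in> vecs v. \<forall>p. card (fib v (z(k:=y)) (Suc k) p) = m (Suc k)}}"
  proof
    fix z' assume "z' \<in> BB v x i m (Suc k)"
    then have z': "\<forall>l<i. z' l = x l" "\<forall>l. Suc k \<le> l \<longrightarrow> z' l = (\<lambda>_. 0)"
      "\<forall>l. i \<le> l \<and> l < Suc k \<longrightarrow> z' l \<in> vecs v" "\<forall>p. card (fib v z' (Suc k) p) = m (Suc k)"
      unfolding BB_def by auto
    define z where "z = z'(k := (\<lambda>_. 0))"
    have fz: "fib v z k p = fib v z' k p" for p by (rule fib_zcong) (simp add: z_def)
    have "card (fib v z' k p) = m k" for p
    proof -
      have "card (fib v z' k p) = (\<Sum>u\<in>(UNIV::3 set). card (fib v z' (Suc k) (p(k := u))))" by (rule fib_split)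
      also have "\<dots> = (\<Sum>u\<in>(UNIV::3 set). m (Suc k))" using z'(4) by simp
      also have "\<dots> = m k" using mk by simp
      finally show ?thesis .
    qed
    then have "z \<in> BB v x i m k" unfolding BB_def using z' ik fz by (auto simp: z_def)
    moreover have "z' = z(k := z' k)" unfolding z_def by simp
    moreover have "z' k \<in> vecs v" using z'(3) ik by auto
    moreover have "\<forall>p. card (fib v (z(k:=z' k)) (Suc k) p) = m (Suc k)"
      using z'(4) \<open>z' = z(k := z' k)\<close> by simp
    ultimately show "z' \<in> {z(k:=y) | z y. z \<in> BB v x i m k \<and>
            y \<in> {y \<in> vecs v. \<forall>p. card (fib v (z(k:=y)) (Suc k) p) = m (Suc k)}}" by blast
  qed
  show "{z(k:=y) | z y. z \<in> BB v x i m k \<and>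
            y \<in> {y \<in> vecs v. \<forall>p. card (fib v (z(k:=y)) (Suc k) p) = m (Suc k)}} \<subseteq> BB v x i m (Suc k)"
  proof
    fix z' assume "z' \<in> {z(k:=y) | z y. z \<in> BB v x i m k \<and>
            y \<in> {y \<in> vecs v. \<forall>p. card (fib v (z(k:=y)) (Suc k) p) = m (Suc k)}}"
    then obtain z y where zz: "z' = z(k:=y)" and z: "z \<in> BB v x i m k" and y: "y \<in> vecs v"
      "\<forall>p. card (fib v (z(k:=y)) (Suc k) p) = m (Suc k)" by blast
    have z1: "\<forall>l<i. z l = x l" "\<forall>l. k \<le> l \<longrightarrow> z l = (\<lambda>_. 0)" "\<forall>l. i \<le> l \<and> l < k \<longrightarrow> z l \<in> vecs v"
      using z unfolding BB_def by auto
    show "z' \<in> BB v x i m (Suc k)" unfolding BB_def zz using z1 y ik by (auto simp: less_Suc_eq)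
  qed
qed

lemma m_facts:
  fixes m :: "nat \<Rightarrow> nat" and v :: nat
  assumes v: "1 \<le> v" and mdef: "\<And>k. k \<le> j \<Longrightarrow> m k * 3 ^ k = v"
  shows "\<And>k. k \<le> j \<Longrightarrow> 0 < m k" and "\<And>k. k < j \<Longrightarrow> m k = 3 * m (Suc k)"
proof -
  fix k assume "k \<le> j"
  then show "0 < m k" using mdef[of k] v by (cases "m k") auto
next
  fix k assume k: "k < j"
  have "m k * 3 ^ k = m (Suc k) * 3 ^ Suc k" using mdef[of k] mdef[of "Suc k"] k by simp
  then have "m k * 3 ^ k = (3 * m (Suc k)) * 3 ^ k" by (simp add: algebra_simps)
  then show "m k = 3 * m (Suc k)" by simp
qed

lemma BB_count:
  fixes m :: "nat \<Rightarrow> nat" and v :: nat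
  assumes v: "1 \<le> v" and mdef: "\<And>k. k \<le> j \<Longrightarrow> m k * 3 ^ k = v"
    and x0: "\<forall>l. i \<le> l \<longrightarrow> x l = (\<lambda>_. 0)" and xi: "\<forall>p. card (fib v x i p) = m i"
  shows "i \<le> k \<Longrightarrow> k \<le> j \<Longrightarrow> finite (BB v x i m k) \<and>
           real (card (BB v x i m k)) = fact (m i) ^ (3 ^ i) / fact (m k) ^ (3 ^ k)"
proof (induction k rule: dec_induct)
  case base
  then show ?case using BB_base[where i=i and x=x and v=v and m=m, OF x0 xi] by simp
next
  case (step k)
  have kj: "k < j" using step by simp
  have IH: "finite (BB v x i m k)" "real (card (BB v x i m k)) = fact (m i) ^ (3 ^ i) / fact (m k) ^ (3 ^ k)"
    using step by auto
  have mk: "m k = 3 * m (Suc k)" using m_facts(2)[OF v mdef kj] .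
  have mpos: "0 < m k" using m_facts(1)[OF v mdef] kj by simp
  define c where "c = ((3 * m (Suc k)) choose m (Suc k)) * ((2 * m (Suc k)) choose m (Suc k))"
  define G where "G z = {y \<in> vecs v. \<forall>p. card (fib v (z(k:=y)) (Suc k) p) = m (Suc k)}" for z
  have cG: "card (G z) = c ^ (3 ^ k)" if z: "z \<in> BB v x i m k" for z
  proof -
    have fz: "\<And>p. card (fib v z k p) = m k" using z unfolding BB_def by auto
    have "card (range (fib v z k)) * m k = v" and fin: "finite (range (fib v z k))"
      using card_fibs[OF fz mpos] by auto
    then have "card (range (fib v z k)) * m k = m k * 3 ^ k" using mdef[of k] kj by simp
    then have N: "card (range (fib v z k)) = 3 ^ k" using mpos by simp
    have fz3: "\<And>p. card (fib v z k p) = 3 * m (Suc k)" using fz mk by simp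
    show ?thesis unfolding G_def c_def by (rule count_G[OF fz3 N fin])
  qed
  have cpos: "0 < c" unfolding c_def by simp
  have fG: "finite (G z)" if "z \<in> BB v x i m k" for z
    using cG[OF that] cpos by (metis card_ge_0_finite power_not_zero zero_less_iff_neq_zero)
  have z0: "z k = (\<lambda>_. 0)" if "z \<in> BB v x i m k" for z using that unfolding BB_def by auto
  have eqB: "BB v x i m (Suc k) = {z(k:=y) | z y. z \<in> BB v x i m k \<and> y \<in> G z}"
    unfolding G_def using BB_step[OF step(1) mk] by simp
  have cardS: "card (BB v x i m (Suc k)) = card (BB v x i m k) * c ^ (3 ^ k)"
    and finS: "finite (BB v x i m (Suc k))"
    unfolding eqB using card_ext[OF IH(1) z0 fG cG] by auto
  have "real c = fact (3 * m (Suc k)) / fact (m (Suc k)) ^ 3" unfolding c_def by (rule choose_fact3)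
  then have rc: "real c = fact (m k) / fact (m (Suc k)) ^ 3" using mk by simp
  have "real (card (BB v x i m (Suc k))) = real (card (BB v x i m k)) * real c ^ (3 ^ k)"
    using cardS by simp
  also have "\<dots> = fact (m i) ^ (3 ^ i) / fact (m k) ^ (3 ^ k) * (fact (m k) / fact (m (Suc k)) ^ 3) ^ (3 ^ k)"
    using IH(2) rc by simp
  also have "\<dots> = fact (m i) ^ (3 ^ i) / fact (m (Suc k)) ^ (3 ^ Suc k)"
    by (simp add: power_divide power_mult[symmetric] mult.commute)
  finally show ?case using finS by simp
qed


lemma AA_Ind:
  assumes ik: "i \<le> k" and x: "Ind v x i" and z: "z \<in> AA v x i E k"
  shows "Ind v z k"
  unfolding Ind_def
proof (intro allI impI)
  fix l assume lk: "l < k"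
  have zx: "\<forall>l<i. z l = x l" and zE: "\<forall>l. i \<le> l \<and> l < k \<longrightarrow> z l \<in> E \<and> z l \<notin> Sp v z l"
    using z unfolding AA_def by auto
  show "z l \<notin> Sp v z l"
  proof (cases "l < i")
    case True
    have "Sp v z l = Sp v x l" by (rule Sp_cong) (use zx True in auto)
    moreover have "x l \<notin> Sp v x l" using x True unfolding Ind_def by auto
    ultimately show ?thesis using zx True by simp
  next
    case False
    then show ?thesis using zE lk by auto
  qed
qed

lemma AA_base:
  assumes x0: "\<forall>l. i \<le> l \<longrightarrow> x l = (\<lambda>_. 0)"
  shows "AA v x i E i = {x}"
proof
  show "AA v x i E i \<subseteq> {x}"
  proof
    fix z assume "z \<in> AA v x i E i"
    then have z: "\<forall>l<i. z l = x l" "\<forall>l. i \<le> l \<longrightarrow> z l = (\<lambda>_. 0)" unfolding AA_def by auto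
    have "z = x"
    proof
      fix l show "z l = x l" using z x0 by (cases "l < i") auto
    qed
    then show "z \<in> {x}" by simp
  qed
  show "{x} \<subseteq> AA v x i E i" unfolding AA_def using x0 by auto
qed

lemma AA_step:
  assumes ik: "i \<le> k"
  shows "AA v x i E (Suc k) = {z(k:=y) | z y. z \<in> AA v x i E k \<and> y \<in> E - Sp v z k}"
proof
  show "AA v x i E (Suc k) \<subseteq> {z(k:=y) | z y. z \<in> AA v x i E k \<and> y \<in> E - Sp v z k}"
  proof
    fix z' assume "z' \<in> AA v x i E (Suc k)"
    then have z': "\<forall>l<i. z' l = x l" "\<forall>l. Suc k \<le> l \<longrightarrow> z' l = (\<lambda>_. 0)"
      "\<forall>l. i \<le> l \<and> l < Suc k \<longrightarrow> z' l \<in> E \<and> z' l \<notin> Sp v z' l"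
      unfolding AA_def by auto
    define z where "z = z'(k := (\<lambda>_. 0))"
    have Spz: "Sp v z l = Sp v z' l" if "l \<le> k" for l by (rule Sp_cong) (use that in \<open>simp add: z_def\<close>)
    have "z \<in> AA v x i E k"
      unfolding AA_def
    proof (intro CollectI conjI allI impI)
      fix l
      show "l < i \<Longrightarrow> z l = x l" using z'(1) ik by (simp add: z_def)
      show "k \<le> l \<Longrightarrow> z l = (\<lambda>_. 0)" using z'(2) by (simp add: z_def)
      assume l: "i \<le> l \<and> l < k"
      show "z l \<in> E" using z'(3) l by (simp add: z_def)
      show "z l \<notin> Sp v z l" using z'(3) l Spz[of l] by (simp add: z_def)
    qed
    moreover have "z' = z(k := z' k)" unfolding z_def by simp
    moreover have "z' k \<in> E - Sp v z k" using z'(3) ik Spz[of k] by auto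
    ultimately show "z' \<in> {z(k:=y) | z y. z \<in> AA v x i E k \<and> y \<in> E - Sp v z k}" by blast
  qed
  show "{z(k:=y) | z y. z \<in> AA v x i E k \<and> y \<in> E - Sp v z k} \<subseteq> AA v x i E (Suc k)"
  proof
    fix z' assume "z' \<in> {z(k:=y) | z y. z \<in> AA v x i E k \<and> y \<in> E - Sp v z k}"
    then obtain z y where zz: "z' = z(k:=y)" and z: "z \<in> AA v x i E k" and y: "y \<in> E" "y \<notin> Sp v z k" by blast
    have z1: "\<forall>l<i. z l = x l" "\<forall>l. k \<le> l \<longrightarrow> z l = (\<lambda>_. 0)" "\<forall>l. i \<le> l \<and> l < k \<longrightarrow> z l \<in> E \<and> z l \<notin> Sp v z l"
      using z unfolding AA_def by auto
    have Spz: "Sp v z' l = Sp v z l" if "l \<le> k" for l by (rule Sp_cong) (use that in \<open>simp add: zz\<close>)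
    show "z' \<in> AA v x i E (Suc k)"
      unfolding AA_def
    proof (intro CollectI conjI allI impI)
      fix l
      show "l < i \<Longrightarrow> z' l = x l" using z1(1) ik by (simp add: zz)
      show "Suc k \<le> l \<Longrightarrow> z' l = (\<lambda>_. 0)" using z1(2) by (simp add: zz)
      assume l: "i \<le> l \<and> l < Suc k"
      show "z' l \<in> E" using z1(3) l y(1) by (cases "l = k") (auto simp: zz)
      show "z' l \<notin> Sp v z' l"
      proof (cases "l = k")
        case True then show ?thesis using y(2) Spz[of k] by (simp add: zz)
      next
        case False then show ?thesis using z1(3) l Spz[of l] by (simp add: zz)
      qed
    qed
  qed
qed

lemma AA_count:
  assumes v: "1 \<le> v" and E: "subspace3 v E" "all_one v \<in> E" "finite E" "card E = 3 ^ Suc j"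
    and x: "Ind v x i" and x0: "\<forall>l. i \<le> l \<longrightarrow> x l = (\<lambda>_. 0)" and xE: "\<forall>l<i. x l \<in> E"
  shows "i \<le> k \<Longrightarrow> k \<le> j \<Longrightarrow> finite (AA v x i E k) \<and>
           card (AA v x i E k) = (\<Prod>l\<in>{i..<k}. (3 ^ (j+1) - 3 ^ (l+1) :: nat))"
proof (induction k rule: dec_induct)
  case base
  then show ?case using AA_base[where i=i and x=x and v=v and E=E, OF x0] by simp
next
  case (step k)
  have IH: "finite (AA v x i E k)" "card (AA v x i E k) = (\<Prod>l\<in>{i..<k}. (3 ^ (j+1) - 3 ^ (l+1) :: nat))"
    using step by auto
  have kj: "k < j" using step by simp
  have cF: "card (E - Sp v z k) = 3 ^ (j+1) - 3 ^ (k+1)" and fF: "finite (E - Sp v z k)"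
    if z: "z \<in> AA v x i E k" for z
  proof -
    have I: "Ind v z k" by (rule AA_Ind[OF step(1) x z])
    have zE: "z l \<in> E" if "l < k" for l
    proof (cases "l < i")
      case True then show ?thesis using z xE unfolding AA_def by auto
    next
      case False then show ?thesis using z that unfolding AA_def by auto
    qed
    have sub: "Sp v z k \<subseteq> E" by (rule Sp_subset[OF E(1) E(2)]) (rule zE)
    have "card (E - Sp v z k) = card E - card (Sp v z k)"
      using sub E(3) by (meson card_Diff_subset finite_subset)
    then show "card (E - Sp v z k) = 3 ^ (j+1) - 3 ^ (k+1)" using card_Sp[OF v I] E(4) by simp
    show "finite (E - Sp v z k)" using E(3) by simp
  qed
  have z0: "z k = (\<lambda>_. 0)" if "z \<in> AA v x i E k" for z using that unfolding AA_def by auto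
  have eqA: "AA v x i E (Suc k) = {z(k:=y) | z y. z \<in> AA v x i E k \<and> y \<in> E - Sp v z k}"
    by (rule AA_step[OF step(1)])
  have "card (AA v x i E (Suc k)) = card (AA v x i E k) * (3 ^ (j+1) - 3 ^ (k+1))"
    and "finite (AA v x i E (Suc k))"
    unfolding eqA using card_ext[OF IH(1) z0 fF cF] by auto
  moreover have "(\<Prod>l\<in>{i..<Suc k}. (3 ^ (j+1) - 3 ^ (l+1) :: nat))
      = (\<Prod>l\<in>{i..<k}. (3 ^ (j+1) - 3 ^ (l+1) :: nat)) * (3 ^ (j+1) - 3 ^ (k+1))"
    using step(1) by (simp add: prod.atLeastLessThan_Suc)
  ultimately show ?case using IH(2) by simp
qed


lemma finite_vecs: "finite (vecs v)"
proof -
  have inj: "inj_on (\<lambda>x. restrict x {1..v}) (vecs v)"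
  proof (rule inj_onI)
    fix x y assume x: "x \<in> vecs v" and y: "y \<in> vecs v" and e: "restrict x {1..v} = restrict y {1..v}"
    show "x = y"
    proof
      fix t show "x t = y t"
      proof (cases "t \<in> {1..v}")
        case True then show ?thesis using fun_cong[OF e, of t] by simp
      next
        case False then show ?thesis using x y unfolding vecs_def by auto
      qed
    qed
  qed
  have "(\<lambda>x. restrict x {1..v}) ` vecs v \<subseteq> PiE {1..v} (\<lambda>_. UNIV::3 set)" by auto
  then have "finite ((\<lambda>x. restrict x {1..v}) ` vecs v)" by (rule finite_subset) (simp add: finite_PiE)
  then show ?thesis using finite_imageD[OF _ inj] by blast
qed

lemma Dset_seq:
  assumes v: "1 \<le> v" and E: "E \<in> Dset v j"
  shows "\<exists>z S. Ind v z j \<and> (\<forall>l. j \<le> l \<longrightarrow> z l = (\<lambda>_. 0)) \<and> (\<forall>l<j. z l \<in> E) \<and> Sp v z j = E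
     \<and> is_STS v S \<and> (\<forall>w\<in>E. \<forall>b\<in>S. orth v w (char_vec b)) \<and> subspace3 v E \<and> finite E
     \<and> card E = 3 ^ Suc j \<and> all_one v \<in> E \<and> (\<forall>k\<le>j. \<forall>p. card (fib v z k p) * 3 ^ k = v)
     \<and> (\<forall>l<j. z l \<in> vecs v)"
proof -
  have sd: "subspace_dim v E (Suc j)" and a1: "all_one v \<in> E"
    and "\<exists>S. is_STS v S \<and> (\<forall>x\<in>E. \<forall>b\<in>S. orth v x (char_vec b))"
    using E unfolding Dset_def by auto
  then obtain S where S: "is_STS v S" "\<forall>x\<in>E. \<forall>b\<in>S. orth v x (char_vec b)" by blast
  have ss: "subspace3 v E" using sd unfolding subspace_dim_def by simp
  have fE: "finite E" and cE: "card E = 3 ^ Suc j" using subspace_dim_card[OF sd] by auto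
  obtain z where z: "Ind v z j" "\<forall>l. j \<le> l \<longrightarrow> z l = (\<lambda>_. 0)" "\<forall>l<j. z l \<in> E" "Sp v z j = E"
    using greedy[OF v ss a1 fE cE] by blast
  have vz: "\<And>l. l < j \<Longrightarrow> z l \<in> vecs v" using z(3) ss unfolding subspace3_def by blast
  have AI: "AInd v z j" using Ind_imp_AInd[OF v vz z(1)] .
  have o: "\<forall>l<j. \<forall>B\<in>S. orth v (z l) (char_vec B)" using S(2) z(3) by blast
  have "\<forall>k\<le>j. \<forall>p. card (fib v z k p) * 3 ^ k = v"
    using fib_sizes[OF v S(1) o AI] by blast
  then show ?thesis using z S ss fE cE a1 vz by blast
qed

lemma main_count:
  assumes v: "1 \<le> v" and ij: "i \<le> j" and E0: "E0 \<in> Dset v j" and D: "D \<in> Dset v i"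
  shows "real (card {E\<in>Dset v j. D \<subseteq> E}) = Gamma v i j"
proof -
  obtain z0 S0 where z0: "Ind v z0 j" "\<forall>l<j. z0 l \<in> E0" "Sp v z0 j = E0"
     and S0: "is_STS v S0" "\<forall>w\<in>E0. \<forall>b\<in>S0. orth v w (char_vec b)"
     and fz0: "\<forall>k\<le>j. \<forall>p. card (fib v z0 k p) * 3 ^ k = v"
    using Dset_seq[OF v E0] by blast
  define m where "m k = v div 3 ^ k" for k
  have mdef: "m k * 3 ^ k = v" if "k \<le> j" for k
  proof -
    have "card (fib v z0 k (\<lambda>_. 0)) * 3 ^ k = v" using fz0 that by blast
    then show ?thesis unfolding m_def by (metis nonzero_mult_div_cancel_right power_not_zero zero_neq_numeral)
  qed
  have fibm: "card (fib v z k p) = m k" if "card (fib v z k p) * 3 ^ k = v" for z k p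
    using that unfolding m_def by (metis nonzero_mult_div_cancel_right power_not_zero zero_neq_numeral)
  have mpos: "0 < m k" if "k \<le> j" for k using m_facts(1)[OF v mdef that] by blast
  obtain x SD where x: "Ind v x i" "\<forall>l. i \<le> l \<longrightarrow> x l = (\<lambda>_. 0)" "\<forall>l<i. x l \<in> D" "Sp v x i = D"
     and SD: "subspace3 v D"
     and fx: "\<forall>k\<le>i. \<forall>p. card (fib v x k p) * 3 ^ k = v"
     and vx: "\<forall>l<i. x l \<in> vecs v"
    using Dset_seq[OF v D] by blast
  have xi: "\<forall>p. card (fib v x i p) = m i" using fx fibm by blast
  have BBj: "finite (BB v x i m j)" "real (card (BB v x i m j)) = fact (m i) ^ (3 ^ i) / fact (m j) ^ (3 ^ j)"
    using BB_count[OF v mdef x(2) xi ij order_refl] by auto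
  define Es where "Es = {E\<in>Dset v j. D \<subseteq> E}"
  define \<Pi>1 where "\<Pi>1 = (\<Prod>l\<in>{i..<j}. (3 ^ (j+1) - 3 ^ (l+1) :: nat))"
  have finEs: "finite Es"
  proof -
    have "Es \<subseteq> Pow (vecs v)" unfolding Es_def Dset_def subspace_dim_def subspace3_def by auto
    then show ?thesis using finite_vecs by (meson finite_Pow_iff finite_subset)
  qed
  have Eprops: "subspace3 v E \<and> all_one v \<in> E \<and> finite E \<and> card E = 3 ^ Suc j \<and> D \<subseteq> E
      \<and> (\<exists>S. is_STS v S \<and> (\<forall>w\<in>E. \<forall>b\<in>S. orth v w (char_vec b)))" if "E \<in> Es" for E
  proof -
    have E: "E \<in> Dset v j" "D \<subseteq> E" using that unfolding Es_def by auto
    show ?thesis using Dset_seq[OF v E(1)] E(2) by blast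
  qed
  have cA: "finite (AA v x i E j) \<and> card (AA v x i E j) = \<Pi>1" if "E \<in> Es" for E
  proof -
    have Ep: "subspace3 v E" "all_one v \<in> E" "finite E" "card E = 3 ^ Suc j" "D \<subseteq> E"
      using Eprops[OF that] by auto
    have xE: "\<forall>l<i. x l \<in> E" using x(3) Ep(5) by auto
    show ?thesis unfolding \<Pi>1_def using AA_count[OF v Ep(1-4) x(1) x(2) xE ij order_refl] by simp
  qed
  define P where "P = Sigma Es (\<lambda>E. AA v x i E j)"
  have cardP: "card P = card Es * \<Pi>1"
  proof -
    have "card P = (\<Sum>E\<in>Es. card (AA v x i E j))" unfolding P_def using finEs cA by (simp add: card_SigmaI)
    also have "\<dots> = (\<Sum>E\<in>Es. \<Pi>1)" using cA by simp
    finally show ?thesis by simp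
  qed
  have toB: "z \<in> BB v x i m j \<and> E = Sp v z j" if "(E, z) \<in> P" for E z
  proof -
    have E: "E \<in> Es" and zA: "z \<in> AA v x i E j" using that unfolding P_def by auto
    have Ep: "subspace3 v E" "all_one v \<in> E" "finite E" "card E = 3 ^ Suc j" "D \<subseteq> E"
      using Eprops[OF E] by auto
    obtain S where S: "is_STS v S" "\<forall>w\<in>E. \<forall>b\<in>S. orth v w (char_vec b)" using Eprops[OF E] by blast
    have I: "Ind v z j" by (rule AA_Ind[OF ij x(1) zA])
    have zz: "\<forall>l<i. z l = x l" "\<forall>l. j \<le> l \<longrightarrow> z l = (\<lambda>_. 0)" "\<forall>l. i \<le> l \<and> l < j \<longrightarrow> z l \<in> E"
      using zA unfolding AA_def by auto
    have zE: "z l \<in> E" if "l < j" for l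
      using zz x(3) Ep(5) that by (cases "l < i") auto
    have sub: "Sp v z j \<subseteq> E" by (rule Sp_subset[OF Ep(1) Ep(2)]) (rule zE)
    have "card (Sp v z j) = card E" using card_Sp[OF v I] Ep(4) by simp
    then have SpE: "Sp v z j = E" using card_subset_eq[OF Ep(3) sub] by simp
    have vz: "\<And>l. l < j \<Longrightarrow> z l \<in> vecs v" using zE Ep(1) unfolding subspace3_def by blast
    have AI: "AInd v z j" using Ind_imp_AInd[OF v vz I] .
    have o: "\<forall>l<j. \<forall>B\<in>S. orth v (z l) (char_vec B)" using S(2) zE by blast
    have "card (fib v z j p) = m j" for p using fib_sizes[OF v S(1) o AI order_refl] fibm by blast
    then have "z \<in> BB v x i m j" unfolding BB_def using zz vz by auto
    then show ?thesis using SpE by simp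
  qed
  have fromB: "(Sp v z j, z) \<in> P" if z: "z \<in> BB v x i m j" for z
  proof -
    have zz: "\<forall>l<i. z l = x l" "\<forall>l. j \<le> l \<longrightarrow> z l = (\<lambda>_. 0)" "\<forall>l. i \<le> l \<and> l < j \<longrightarrow> z l \<in> vecs v"
      "\<forall>p. card (fib v z j p) = m j"
      using z unfolding BB_def by auto
    have ne: "\<And>p. fib v z j p \<noteq> {}" using zz(4) mpos[of j] by (metis card.empty less_irrefl order_refl)
    have AI: "AInd v z j" by (rule fib_AInd) (rule ne)
    have I: "Ind v z j" by (rule AInd_imp_Ind[OF AI])
    have vz: "\<And>l. l < j \<Longrightarrow> z l \<in> vecs v" using zz(1) zz(3) vx by (metis not_less)
    have sd: "subspace_dim v (Sp v z j) (Suc j)" by (rule basis_dim[OF v vz AI])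
    have cards: "\<And>p. card (fib v z j p) = card (fib v z0 j p)"
      using zz(4) fz0 fibm by (metis order_refl)
    have orth0: "\<forall>w\<in>Sp v z0 j. \<forall>B\<in>S0. orth v w (char_vec B)" using S0(2) z0(3) by simp
    obtain S where "is_STS v S" "\<forall>w\<in>Sp v z j. \<forall>B\<in>S. orth v w (char_vec B)"
      using transport[OF v S0(1) orth0 cards] by blast
    then have inD: "Sp v z j \<in> Dset v j" unfolding Dset_def using sd all_one_Sp by auto
    have "D = Sp v z i" using x(4) Sp_cong[of i z x v] zz(1) by simp
    also have "\<dots> \<subseteq> Sp v z j" by (rule Sp_mono[OF ij])
    finally have DE: "D \<subseteq> Sp v z j" .
    have "z \<in> AA v x i (Sp v z j) j"
      unfolding AA_def using zz(1) zz(2) z_in_Sp I unfolding Ind_def by auto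
    then show ?thesis unfolding P_def Es_def using inD DE by auto
  qed
  have inj: "inj_on snd P"
  proof (rule inj_onI)
    fix a b assume a: "a \<in> P" and b: "b \<in> P" and e: "snd a = snd b"
    obtain E z where az: "a = (E, z)" by (cases a)
    obtain E' z' where bz: "b = (E', z')" by (cases b)
    have "E = Sp v z j" using toB a az by simp
    moreover have "E' = Sp v z' j" using toB b bz by simp
    ultimately show "a = b" using e az bz by simp
  qed
  have img: "snd ` P = BB v x i m j"
  proof
    show "snd ` P \<subseteq> BB v x i m j" using toB by force
    show "BB v x i m j \<subseteq> snd ` P"
    proof
      fix z assume "z \<in> BB v x i m j"
      then have "(Sp v z j, z) \<in> P" by (rule fromB)
      then show "z \<in> snd ` P" by force
    qed
  qed
  have "card (BB v x i m j) = card P" using card_image[OF inj] img by simp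
  then have key: "card Es * \<Pi>1 = card (BB v x i m j)" using cardP by simp
  have PI: "real \<Pi>1 = 3 ^ (((j+i+1)*(j-i)) div 2) * 2 ^ (j-i) * qfact 3 (j-i)"
    unfolding \<Pi>1_def by (rule PI_formula[OF ij])
  have Pipos: "real \<Pi>1 \<noteq> 0"
  proof -
    have "(3::nat) ^ (l+1) < 3 ^ (j+1)" if "l \<in> {i..<j}" for l using that by (intro power_strict_increasing) auto
    then have "\<Pi>1 \<noteq> 0" unfolding \<Pi>1_def by (simp add: prod_zero_iff)
    then show ?thesis by simp
  qed
  have "real (card Es) * real \<Pi>1 = fact (m i) ^ (3 ^ i) / fact (m j) ^ (3 ^ j)"
    using key BBj(2) by (metis of_nat_mult)
  then have "real (card Es) = fact (m i) ^ (3 ^ i) / fact (m j) ^ (3 ^ j) / real \<Pi>1"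
    using Pipos by (simp add: field_simps)
  also have "\<dots> = Gamma v i j" unfolding Gamma_def PI m_def by (simp add: field_simps)
  finally show ?thesis unfolding Es_def .
qed


theorem lemma3:
  fixes v i j :: nat
  assumes "v mod 6 = 1 \<or> v mod 6 = 3"
    and "i \<le> j"
    and "Dset v j \<noteq> {}"
  shows "(\<forall>D\<in>Dset v i. real (card {E\<in>Dset v j. D \<subseteq> E}) = Gamma v i j)
         \<and> real (card (Dset v j)) = Gamma v 0 j"
proof -
  have v: "1 \<le> v" using assms(1) by (cases v) auto
  obtain E0 where E0: "E0 \<in> Dset v j" using assms(3) by blast
  have part1: "\<forall>D\<in>Dset v i. real (card {E\<in>Dset v j. D \<subseteq> E}) = Gamma v i j"
    using main_count[OF v assms(2) E0] by blast
  define z :: "nat \<Rightarrow> gf3vec" where "z = (\<lambda>_ _. 0)"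
  define C where "C = Sp v z 0"
  obtain S0 where S0: "is_STS v S0" "\<forall>w\<in>E0. \<forall>b\<in>S0. orth v w (char_vec b)"
    and E0s: "subspace3 v E0" "all_one v \<in> E0"
    using Dset_seq[OF v E0] by blast
  have CE: "C \<subseteq> E" if "E \<in> Dset v j" for E
  proof -
    have "subspace3 v E" "all_one v \<in> E" using Dset_seq[OF v that] by blast+
    then show ?thesis unfolding C_def by (rule Sp_subset) simp
  qed
  have AI: "AInd v z 0" by (rule Ind_imp_AInd[OF v]) (simp_all add: Ind_def)
  have sd: "subspace_dim v C (Suc 0)" unfolding C_def by (rule basis_dim[OF v _ AI]) simp
  have "C \<in> Dset v 0"
    unfolding Dset_def using sd all_one_Sp[of v z 0] CE[OF E0] S0 unfolding C_def by auto
  then have "real (card {E\<in>Dset v j. C \<subseteq> E}) = Gamma v 0 j"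
    using main_count[OF v _ E0] by blast
  moreover have "{E\<in>Dset v j. C \<subseteq> E} = Dset v j" using CE by blast
  ultimately show ?thesis using part1 by simp
qed


end
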